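(* Let $N\geq2$, let $\mathcal{H}_{X_1},\dots,\mathcal{H}_{X_N}$ be finite-dimensional Hilbert spaces and let $\rho=|V\rangle\langle V|$ be a pure state on $\mathcal{H}_{X_1}\otimes\cdots\otimes\mathcal{H}_{X_N}$ such that $I(X_1:X_j)_\rho=0$ for all $j\neq1$. For each $i$, let $\lambda^i_1\geq\lambda^i_2\geq\cdots$ be the eigenvalues of $\rho_{X_i}$ in decreasing order and $|e^i_1\rangle,|e^i_2\rangle,\dots$ a corresponding orthonormal eigenbasis of $\mathcal{H}_{X_i}$. Write $|V\rangle=\sum_{x_1,\dots,x_N}V_{x_1\dots x_N}|e^1_{x_1}\rangle\otimes\cdots\otimes|e^N_{x_N}\rangle$, and set $\epsilon_i=1-\lambda^i_1$ and $\varepsilon=\sum_{i=1}^N\epsilon_i$. Then $$\sum_{x_1>1}|V_{x_1 1\dots1}|^2\geq\epsilon_1(1+\epsilon_1-\varepsilon).$$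
   Context: $\rho_{\mathcal X}$ denotes the reduced state (partial trace over the factors not in $\mathcal X$). Von Neumann entropy of a density operator $\sigma$ is $-\mathrm{Tr}[\sigma\log\sigma]$ (binary logarithm); $H(\mathcal X)_\rho$ is the entropy of $\rho_{\mathcal X}$, and $I(X_i:X_j)_\rho=H(X_i)_\rho+H(X_j)_\rho-H(X_iX_j)_\rho$. The sum runs over indices $x_1=2,\dots,\dim\mathcal{H}_{X_1}$, with all other indices equal to $1$. *)

theory Defs
  imports Complex_Main "HOL-Library.FuncSet"
begin

text \<open>There are N parties, indexed 0,...,N-1 (party 0 is X_1 of the paper).
 Party i has Hilbert space C^(d i) with computational basis indexed by {..<d i}.
 A joint basis index is a function x in PiE {..<N} (\<lambda>i. {..<d i}); a vector of the
 joint space is a function V from such indices to complex numbers.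
 Matrices on a finite index set K are functions K -> K -> complex.\<close>

definition configs :: "nat \<Rightarrow> (nat \<Rightarrow> nat) \<Rightarrow> (nat \<Rightarrow> nat) set" where
  "configs N d = PiE {..<N} (\<lambda>i. {..<d i})"

text \<open>Reduced state of the pure state |V><V| on the parties in S (partial trace over the rest);
 indexed by y, z in PiE S (\<lambda>i. {..<d i}).\<close>
definition reduced ::
  "nat \<Rightarrow> (nat \<Rightarrow> nat) \<Rightarrow> ((nat \<Rightarrow> nat) \<Rightarrow> complex) \<Rightarrow> nat set
    \<Rightarrow> (nat \<Rightarrow> nat) \<Rightarrow> (nat \<Rightarrow> nat) \<Rightarrow> complex" where
  "reduced N d V S y z =
     (\<Sum>x\<in>{x\<in>configs N d. restrict x S = y}.
        V x * cnj (V (\<lambda>i. if i \<in> S then z i else x i)))"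

definition red_index_set :: "(nat \<Rightarrow> nat) \<Rightarrow> nat set \<Rightarrow> (nat \<Rightarrow> nat) set" where
  "red_index_set d S = PiE S (\<lambda>i. {..<d i})"

definition reduced1 ::
  "nat \<Rightarrow> (nat \<Rightarrow> nat) \<Rightarrow> ((nat \<Rightarrow> nat) \<Rightarrow> complex) \<Rightarrow> nat \<Rightarrow> nat \<Rightarrow> nat \<Rightarrow> complex" where
  "reduced1 N d V i a b =
     reduced N d V {i} ((\<lambda>_. undefined)(i := a)) ((\<lambda>_. undefined)(i := b))"

definition orthonormal_eigenbasis ::
  "'k set \<Rightarrow> ('k \<Rightarrow> 'k \<Rightarrow> complex) \<Rightarrow> ('k \<Rightarrow> 'k \<Rightarrow> complex) \<Rightarrow> ('k \<Rightarrow> real) \<Rightarrow> bool" where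
  "orthonormal_eigenbasis K A u lam \<longleftrightarrow>
     (\<forall>k\<in>K. \<forall>l\<in>K. (\<Sum>m\<in>K. u k m * cnj (u l m)) = (if k = l then 1 else 0)) \<and>
     (\<forall>k\<in>K. \<forall>a\<in>K. (\<Sum>b\<in>K. A a b * u k b) = complex_of_real (lam k) * u k a)"

definition vn_entropy :: "'k set \<Rightarrow> ('k \<Rightarrow> 'k \<Rightarrow> complex) \<Rightarrow> real" where
  "vn_entropy K A = (SOME h. \<exists>u lam. orthonormal_eigenbasis K A u lam \<and>
      h = - (\<Sum>k\<in>K. if lam k = 0 then 0 else lam k * log 2 (lam k)))"

definition entropy_of ::
  "nat \<Rightarrow> (nat \<Rightarrow> nat) \<Rightarrow> ((nat \<Rightarrow> nat) \<Rightarrow> complex) \<Rightarrow> nat set \<Rightarrow> real" where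
  "entropy_of N d V S = vn_entropy (red_index_set d S) (reduced N d V S)"

definition mutual_info ::
  "nat \<Rightarrow> (nat \<Rightarrow> nat) \<Rightarrow> ((nat \<Rightarrow> nat) \<Rightarrow> complex) \<Rightarrow> nat \<Rightarrow> nat \<Rightarrow> real" where
  "mutual_info N d V i j =
     entropy_of N d V {i} + entropy_of N d V {j} - entropy_of N d V {i, j}"

definition coeff_in_basis ::
  "nat \<Rightarrow> (nat \<Rightarrow> nat) \<Rightarrow> ((nat \<Rightarrow> nat) \<Rightarrow> complex) \<Rightarrow> (nat \<Rightarrow> nat \<Rightarrow> nat \<Rightarrow> complex)
     \<Rightarrow> (nat \<Rightarrow> nat) \<Rightarrow> complex" where
  "coeff_in_basis N d V e y = (\<Sum>x\<in>configs N d. (\<Prod>i<N. cnj (e i (y i) (x i))) * V x)"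

end

theory Submission
  imports Defs "HOL-Analysis.Analysis"
begin


definition ip :: "'k set \<Rightarrow> ('k \<Rightarrow> complex) \<Rightarrow> ('k \<Rightarrow> complex) \<Rightarrow> complex" where
  "ip K v w = (\<Sum>m\<in>K. v m * cnj (w m))"

definition onf :: "'k set \<Rightarrow> 'i set \<Rightarrow> ('i \<Rightarrow> 'k \<Rightarrow> complex) \<Rightarrow> bool" where
  "onf K I u \<longleftrightarrow> (\<forall>k\<in>I. \<forall>l\<in>I. ip K (u k) (u l) = (if k = l then 1 else 0))"

lemma ip_sum_left:
  "ip K (\<lambda>m. \<Sum>k\<in>I. c k * u k m) w = (\<Sum>k\<in>I. c k * ip K (u k) w)"
  unfolding ip_def by (simp add: sum_distrib_left sum_distrib_right mult.assoc sum.swap[of _ K])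

lemma ip_sum_right:
  "ip K w (\<lambda>m. \<Sum>k\<in>I. c k * u k m) = (\<Sum>k\<in>I. cnj (c k) * ip K w (u k))"
  unfolding ip_def by (simp add: sum_distrib_left sum_distrib_right mult.assoc mult.left_commute sum.swap[of _ K])

lemma ip_diff_left: "ip K (\<lambda>m. v m - v' m) w = ip K v w - ip K v' w"
  unfolding ip_def by (simp add: sum_subtractf left_diff_distrib)

lemma ip_diff_right: "ip K w (\<lambda>m. v m - v' m) = ip K w v - ip K w v'"
  unfolding ip_def by (simp add: sum_subtractf right_diff_distrib)

lemma ip_delta_left: "finite K \<Longrightarrow> a \<in> K \<Longrightarrow> ip K (\<lambda>m. if m = a then 1 else 0) w = cnj (w a)"
  unfolding ip_def by (simp add: if_distrib[of "\<lambda>x. x * _"] cong: if_cong)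

lemma ip_delta_right: "finite K \<Longrightarrow> a \<in> K \<Longrightarrow> ip K w (\<lambda>m. if m = a then 1 else 0) = w a"
  unfolding ip_def by (simp add: if_distrib cong: if_cong)

lemma ip_conj: "ip K w v = cnj (ip K v w)"
  unfolding ip_def by (simp add: mult.commute)

lemma mult_cnj_cmod: "z * cnj z = complex_of_real ((cmod z)\<^sup>2)"
  by (simp add: complex_mult_cnj cmod_power2)

lemma ip_self: "ip K v v = complex_of_real (\<Sum>m\<in>K. (cmod (v m))\<^sup>2)"
  unfolding ip_def by (simp add: mult_cnj_cmod)

lemma ip_self_zero: "finite K \<Longrightarrow> ip K v v = 0 \<Longrightarrow> m \<in> K \<Longrightarrow> v m = 0"
proof -
  assume K: "finite K" and z: "ip K v v = 0" and m: "m \<in> K"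
  have "(\<Sum>m\<in>K. (cmod (v m))\<^sup>2) = 0" using z by (metis ip_self of_real_eq_0_iff)
  then have "(cmod (v m))\<^sup>2 = 0" using K m by (simp add: sum_nonneg_eq_0_iff)
  then show "v m = 0" by simp
qed

lemma onf_sum: assumes "onf K I u" "finite I" "l \<in> I"
  shows "(\<Sum>k\<in>I. c k * ip K (u k) (u l)) = c l"
proof -
  have "(\<Sum>k\<in>I. c k * ip K (u k) (u l)) = (\<Sum>k\<in>I. if k = l then c k else 0)"
    by (rule sum.cong) (use assms in \<open>auto simp: onf_def\<close>)
  then show ?thesis using assms by simp
qed

lemma onf_sum': assumes "onf K I u" "finite I" "l \<in> I"
  shows "(\<Sum>k\<in>I. c k * ip K (u l) (u k)) = c l"
proof -
  have "(\<Sum>k\<in>I. c k * ip K (u l) (u k)) = (\<Sum>k\<in>I. if k = l then c k else 0)"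
    by (rule sum.cong) (use assms in \<open>auto simp: onf_def\<close>)
  then show ?thesis using assms by simp
qed


lemma resid:
  assumes K: "finite K" and I: "finite I" and u: "onf K I u" and a: "a \<in> K"
  defines "r \<equiv> \<lambda>b. (if b = a then 1 else 0) - (\<Sum>k\<in>I. cnj (u k a) * u k b)"
  shows "ip K r r = 1 - complex_of_real (\<Sum>k\<in>I. (cmod (u k a))\<^sup>2)"
    and "\<forall>l\<in>I. ip K r (u l) = 0"
proof -
  define dl where "dl = (\<lambda>b. if b = a then (1::complex) else 0)"
  define P where "P = (\<lambda>b. \<Sum>k\<in>I. cnj (u k a) * u k b)"
  have r: "r = (\<lambda>b. dl b - P b)" unfolding r_def dl_def P_def by simp
  define s where "s = (\<Sum>k\<in>I. cnj (u k a) * u k a)"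
  have s: "s = complex_of_real (\<Sum>k\<in>I. (cmod (u k a))\<^sup>2)"
    unfolding s_def by (simp add: mult.commute[of "cnj _"] mult_cnj_cmod)
  have dd: "ip K dl dl = 1" unfolding dl_def using K a by (simp add: ip_delta_left)
  have dP: "ip K dl P = s" unfolding dl_def using K a
    by (simp add: ip_delta_left P_def s_def mult.commute)
  have Pd: "ip K P dl = s" unfolding dl_def using K a
    by (simp add: ip_delta_right P_def s_def)
  have PP: "ip K P P = s"
  proof -
    have "ip K P P = (\<Sum>k\<in>I. cnj (u k a) * ip K (u k) P)"
      unfolding P_def by (rule ip_sum_left)
    also have "\<dots> = (\<Sum>k\<in>I. cnj (u k a) * u k a)"
    proof (rule sum.cong)
      fix k assume k: "k \<in> I"
      have "ip K (u k) P = (\<Sum>l\<in>I. cnj (cnj (u l a)) * ip K (u k) (u l))"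
        unfolding P_def by (rule ip_sum_right)
      also have "\<dots> = u k a" using onf_sum'[OF u I k, of "\<lambda>l. cnj (cnj (u l a))"] by simp
      finally show "cnj (u k a) * ip K (u k) P = cnj (u k a) * u k a" by simp
    qed simp
    finally show ?thesis unfolding s_def .
  qed
  have "ip K r r = ip K dl r - ip K P r" unfolding r by (rule ip_diff_left)
  also have "\<dots> = (ip K dl dl - ip K dl P) - (ip K P dl - ip K P P)"
    unfolding r ip_diff_right ..
  also have "\<dots> = 1 - s" using dd dP Pd PP by simp
  finally show "ip K r r = 1 - complex_of_real (\<Sum>k\<in>I. (cmod (u k a))\<^sup>2)" using s by simp
  show "\<forall>l\<in>I. ip K r (u l) = 0"
  proof
    fix l assume l: "l \<in> I"
    have "ip K dl (u l) = cnj (u l a)" unfolding dl_def using K a by (simp add: ip_delta_left)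
    moreover have "ip K P (u l) = cnj (u l a)"
      unfolding P_def ip_sum_left using onf_sum[OF u I l] by simp
    ultimately show "ip K r (u l) = 0" unfolding r ip_diff_left by simp
  qed
qed

lemma sum_cmod_family:
  assumes K: "finite K" and I: "finite I" and u: "onf K I u"
  shows "(\<Sum>a\<in>K. \<Sum>k\<in>I. (cmod (u k a))\<^sup>2) = real (card I)"
proof -
  have "(\<Sum>a\<in>K. \<Sum>k\<in>I. (cmod (u k a))\<^sup>2) = (\<Sum>k\<in>I. \<Sum>a\<in>K. (cmod (u k a))\<^sup>2)"
    by (rule sum.swap)
  also have "\<dots> = (\<Sum>k\<in>I. 1)"
  proof (rule sum.cong)
    fix k assume k: "k \<in> I"
    have "ip K (u k) (u k) = 1" using u k by (simp add: onf_def)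
    then show "(\<Sum>a\<in>K. (cmod (u k a))\<^sup>2) = 1" unfolding ip_self
      by (metis of_real_eq_1_iff)
  qed simp
  finally show ?thesis by simp
qed

lemma resid_le:
  assumes K: "finite K" and I: "finite I" and u: "onf K I u" and a: "a \<in> K"
  shows "(\<Sum>k\<in>I. (cmod (u k a))\<^sup>2) \<le> 1"
proof -
  define r where "r = (\<lambda>b. (if b = a then 1 else 0) - (\<Sum>k\<in>I. cnj (u k a) * u k b))"
  have "ip K r r = 1 - complex_of_real (\<Sum>k\<in>I. (cmod (u k a))\<^sup>2)"
    using resid(1)[OF K I u a] unfolding r_def .
  then have "complex_of_real (\<Sum>m\<in>K. (cmod (r m))\<^sup>2) = complex_of_real (1 - (\<Sum>k\<in>I. (cmod (u k a))\<^sup>2))"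
    unfolding ip_self by simp
  then have "(\<Sum>m\<in>K. (cmod (r m))\<^sup>2) = 1 - (\<Sum>k\<in>I. (cmod (u k a))\<^sup>2)"
    using of_real_eq_iff by blast
  moreover have "(\<Sum>m\<in>K. (cmod (r m))\<^sup>2) \<ge> 0" by (simp add: sum_nonneg)
  ultimately show ?thesis by linarith
qed

lemma onf_complete:
  assumes K: "finite K" and I: "finite I" and u: "onf K I u" and c: "card I = card K"
    and a: "a \<in> K" and b: "b \<in> K"
  shows "(\<Sum>k\<in>I. cnj (u k a) * u k b) = (if b = a then 1 else 0)"
proof -
  define s where "s = (\<lambda>a. \<Sum>k\<in>I. (cmod (u k a))\<^sup>2)"
  have le: "\<forall>a\<in>K. s a \<le> 1" unfolding s_def using resid_le[OF K I u] by blast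
  have tot: "(\<Sum>a\<in>K. s a) = real (card K)" unfolding s_def using sum_cmod_family[OF K I u] c by simp
  have "(\<Sum>a\<in>K. 1 - s a) = 0" using tot by (simp add: sum_subtractf)
  then have "\<forall>a\<in>K. 1 - s a = 0" using le K by (subst (asm) sum_nonneg_eq_0_iff) auto
  then have sa: "s a = 1" using a by auto
  define r where "r = (\<lambda>b. (if b = a then 1 else 0) - (\<Sum>k\<in>I. cnj (u k a) * u k b))"
  have "ip K r r = 1 - complex_of_real (s a)"
    using resid(1)[OF K I u a] unfolding r_def s_def .
  then have "ip K r r = 0" using sa by simp
  then have "r b = 0" using ip_self_zero[OF K _ b] by blast
  then show ?thesis unfolding r_def by simp
qed

lemma onf_exists_orth:
  assumes K: "finite K" and I: "finite I" and u: "onf K I u" and c: "card I < card K"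
  shows "\<exists>v. ip K v v = 1 \<and> (\<forall>l\<in>I. ip K v (u l) = 0)"
proof -
  define s where "s = (\<lambda>a. \<Sum>k\<in>I. (cmod (u k a))\<^sup>2)"
  have tot: "(\<Sum>a\<in>K. s a) = real (card I)" unfolding s_def using sum_cmod_family[OF K I u] by simp
  have "\<exists>a\<in>K. s a < 1"
  proof (rule ccontr)
    assume "\<not> ?thesis"
    then have "(\<Sum>a\<in>K. (1::real)) \<le> (\<Sum>a\<in>K. s a)" by (intro sum_mono) auto
    then show False using tot c by simp
  qed
  then obtain a where a: "a \<in> K" and sa: "s a < 1" by blast
  define r where "r = (\<lambda>b. (if b = a then 1 else 0) - (\<Sum>k\<in>I. cnj (u k a) * u k b))"
  have rr: "ip K r r = complex_of_real (1 - s a)"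
    using resid(1)[OF K I u a] unfolding r_def s_def by simp
  have ro: "\<forall>l\<in>I. ip K r (u l) = 0" using resid(2)[OF K I u a] unfolding r_def .
  define t where "t = 1 - s a"
  have t: "t > 0" using sa t_def by simp
  obtain c :: real where c: "c * c * t = 1"
  proof -
    have "(1 / sqrt t) * (1 / sqrt t) * t = 1" using t
      by (simp add: power2_eq_square[symmetric] power_divide)
    then show ?thesis using that by blast
  qed
  define v where "v = (\<lambda>b. complex_of_real c * r b)"
  have "ip K v v = complex_of_real (c * c) * ip K r r"
    unfolding v_def ip_def by (simp add: sum_distrib_left mult_ac)
  also have "\<dots> = 1" using rr c unfolding t_def[symmetric] by (metis of_real_1 of_real_mult)
  finally have "ip K v v = 1" .
  moreover have "\<forall>l\<in>I. ip K v (u l) = 0"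
    using ro unfolding v_def ip_def by (simp add: sum_distrib_left[symmetric] mult.assoc)
  ultimately show ?thesis by blast
qed



definition mv :: "'k set \<Rightarrow> ('k \<Rightarrow> 'k \<Rightarrow> complex) \<Rightarrow> ('k \<Rightarrow> complex) \<Rightarrow> 'k \<Rightarrow> complex" where
  "mv K A v = (\<lambda>a. \<Sum>b\<in>K. A a b * v b)"

definition herm :: "'k set \<Rightarrow> ('k \<Rightarrow> 'k \<Rightarrow> complex) \<Rightarrow> bool" where
  "herm K A \<longleftrightarrow> (\<forall>a\<in>K. \<forall>b\<in>K. A a b = cnj (A b a))"

lemma herm_ip: assumes "herm K A" shows "ip K (mv K A v) w = ip K v (mv K A w)"
proof -
  have "ip K (mv K A v) w = (\<Sum>a\<in>K. \<Sum>b\<in>K. A a b * v b * cnj (w a))"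
    unfolding ip_def mv_def by (simp add: sum_distrib_right)
  also have "\<dots> = (\<Sum>b\<in>K. \<Sum>a\<in>K. A a b * v b * cnj (w a))" by (rule sum.swap)
  also have "\<dots> = (\<Sum>b\<in>K. \<Sum>a\<in>K. v b * (cnj (A b a) * cnj (w a)))"
  proof (rule sum.cong[OF refl], rule sum.cong[OF refl])
    fix b a assume "b \<in> K" "a \<in> K"
    then have e: "A a b = cnj (A b a)" using assms unfolding herm_def by blast
    show "A a b * v b * cnj (w a) = v b * (cnj (A b a) * cnj (w a))"
      unfolding e by (simp only: mult_ac)
  qed
  also have "\<dots> = ip K v (mv K A w)"
    unfolding ip_def mv_def by (simp add: sum_distrib_left)
  finally show ?thesis .
qed

lemma ip_scale_left: "ip K (\<lambda>a. c * v a) w = c * ip K v w"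
  unfolding ip_def by (simp add: sum_distrib_left mult_ac)

lemma ip_scale_right: "ip K w (\<lambda>a. c * v a) = cnj c * ip K w v"
  unfolding ip_def by (simp add: sum_distrib_left mult_ac)

lemma ip_cong: "(\<And>a. a \<in> K \<Longrightarrow> v a = v' a) \<Longrightarrow> (\<And>a. a \<in> K \<Longrightarrow> w a = w' a) \<Longrightarrow> ip K v w = ip K v' w'"
  unfolding ip_def by simp

lemma ip_lin2:
  fixes \<tau> :: real and f g h k :: "'k \<Rightarrow> complex"
  shows "ip K (\<lambda>a. f a + complex_of_real \<tau> * g a) (\<lambda>a. h a + complex_of_real \<tau> * k a) =
    ip K f h + complex_of_real \<tau> * ip K f k + complex_of_real \<tau> * ip K g h + complex_of_real \<tau> * complex_of_real \<tau> * ip K g k"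
  unfolding ip_def by (simp add: sum.distrib sum_distrib_left distrib_left distrib_right mult_ac)

lemma mv_lin: "mv K A (\<lambda>b. f b + c * g b) = (\<lambda>a. mv K A f a + c * mv K A g a)"
  unfolding mv_def by (simp add: sum.distrib sum_distrib_left algebra_simps)

lemma quad_zero:
  fixes r c :: real
  assumes "c \<ge> 0" "\<forall>\<tau>::real. 2 * \<tau> * r + \<tau> * \<tau> * c \<ge> 0"
  shows "r = 0"
proof (rule ccontr)
  assume r: "r \<noteq> 0"
  define s where "s = c + 1"
  have s: "s > 0" using assms(1) s_def by simp
  define \<tau> where "\<tau> = - r / s"
  have "2 * \<tau> * r + \<tau> * \<tau> * c \<ge> 0" using assms by blast
  moreover have "\<tau> * s = - r" unfolding \<tau>_def using s by simp
  ultimately have "(2 * \<tau> * r + \<tau> * \<tau> * c) * (s * s) \<ge> 0" using s by simp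
  moreover have "(2 * \<tau> * r + \<tau> * \<tau> * c) * (s * s) = 2 * (\<tau> * s) * r * s + (\<tau> * s) * (\<tau> * s) * c"
    by (simp add: algebra_simps)
  ultimately have "- 2 * r * r * s + r * r * c \<ge> 0" using \<open>\<tau> * s = - r\<close> by simp
  then have "r * r * (c - 2 * s) \<ge> 0" by (simp add: algebra_simps)
  moreover have "c - 2 * s < 0" using s_def assms(1) by simp
  moreover have "r * r > 0" using r by (auto simp add: zero_less_mult_iff linorder_neq_iff)
  ultimately show False by (metis mult_pos_neg leD)
qed


lemma ip_add_left: "ip K (\<lambda>a. f a + c * g a) h = ip K f h + c * ip K g h"
proof -
  have "ip K (\<lambda>a. f a + c * g a) h = (\<Sum>m\<in>K. f m * cnj (h m) + c * (g m * cnj (h m)))"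
    unfolding ip_def by (simp add: distrib_right mult.assoc)
  then show ?thesis unfolding ip_def by (simp add: sum.distrib sum_distrib_left)
qed

lemma ip_real: "Re (ip K x x) = (\<Sum>m\<in>K. (cmod (x m))\<^sup>2)" "ip K x x = complex_of_real (Re (ip K x x))"
  unfolding ip_self by simp_all

lemma cont_ip: "continuous_on UNIV (\<lambda>v::'k \<Rightarrow> complex. ip K (f v) (g v))"
  if "\<And>a. continuous_on UNIV (\<lambda>v. f v a)" "\<And>a. continuous_on UNIV (\<lambda>v. g v a)"
  unfolding ip_def by (intro continuous_intros that)

lemma cont_coord: "continuous_on UNIV (\<lambda>v::'k \<Rightarrow> complex. v a)"
  by simp

lemma cont_mv: "continuous_on UNIV (\<lambda>v::'k \<Rightarrow> complex. mv K A v a)"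
  unfolding mv_def by (intro continuous_intros cont_coord)

lemma spec_step:
  fixes A :: "'k \<Rightarrow> 'k \<Rightarrow> complex" and u :: "nat \<Rightarrow> 'k \<Rightarrow> complex" and lam :: "nat \<Rightarrow> real"
  assumes K: "finite K" and H: "herm K A" and u: "onf K {..<n} u"
    and ev: "\<forall>k<n. \<forall>a\<in>K. mv K A (u k) a = complex_of_real (lam k) * u k a"
    and n: "n < card K"
  shows "\<exists>v \<mu>. ip K v v = 1 \<and> (\<forall>k<n. ip K v (u k) = 0) \<and> (\<forall>a\<in>K. mv K A v a = complex_of_real \<mu> * v a)"
proof -
  define inW where "inW x \<longleftrightarrow> (\<forall>k<n. ip K x (u k) = 0)" for x
  have inv: "inW (mv K A x)" if "inW x" for x
    unfolding inW_def
  proof (intro allI impI)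
    fix k assume k: "k < n"
    have "ip K (mv K A x) (u k) = ip K x (mv K A (u k))" by (rule herm_ip[OF H])
    also have "\<dots> = ip K x (\<lambda>a. complex_of_real (lam k) * u k a)"
      using ev k by (intro ip_cong) auto
    also have "\<dots> = 0" unfolding ip_scale_right using that k inW_def by simp
    finally show "ip K (mv K A x) (u k) = 0" .
  qed
  define S where "S = PiE (UNIV::'k set) (\<lambda>a. if a \<in> K then cball (0::complex) 1 else {0})"
  have "compactin (product_topology (\<lambda>_. euclidean) UNIV) S"
    unfolding S_def by (subst compactin_PiE) auto
  then have cS: "compact S" by (simp add: euclidean_product_topology)
  have cl1: "closed {v::'k\<Rightarrow>complex. ip K v v = 1}"
    by (intro closed_Collect_eq cont_ip cont_coord continuous_on_const)
  have "{v. inW v} = (\<Inter>k\<in>{..<n}. {v. ip K v (u k) = 0})" unfolding inW_def by auto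
  moreover have "closed (\<Inter>k\<in>{..<n}. {v::'k\<Rightarrow>complex. ip K v (u k) = 0})"
    by (intro closed_INT ballI closed_Collect_eq cont_ip cont_coord continuous_on_const)
  ultimately have cl2: "closed {v. inW v}" by simp
  define C where "C = S \<inter> {v. ip K v v = 1} \<inter> {v. inW v}"
  have cC: "compact C" unfolding C_def using cS cl1 cl2 by (intro compact_Int_closed closed_Int)
  obtain v1 where v1: "ip K v1 v1 = 1" "\<forall>l\<in>{..<n}. ip K v1 (u l) = 0"
    using onf_exists_orth[OF K _ u] n by auto
  define v1' where "v1' = (\<lambda>a. if a \<in> K then v1 a else 0)"
  have "v1' \<in> C"
  proof -
    have "cmod (v1 a) \<le> 1" if a: "a \<in> K" for a
    proof -
      have "(cmod (v1 a))\<^sup>2 \<le> (\<Sum>m\<in>K. (cmod (v1 m))\<^sup>2)"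
        by (rule member_le_sum) (use a K in auto)
      also have "\<dots> = 1" using v1(1) ip_real(1)[of K v1] by simp
      finally show ?thesis by (simp add: power_le_one_iff abs_square_le_1)
    qed
    then have "v1' \<in> S" unfolding S_def v1'_def by (auto simp: PiE_iff)
    moreover have "ip K v1' v1' = 1" using v1(1) by (metis (mono_tags) ip_cong v1'_def)
    moreover have "inW v1'" unfolding inW_def using v1(2)
      by (metis (mono_tags) ip_cong lessThan_iff v1'_def)
    ultimately show ?thesis unfolding C_def by auto
  qed
  then have Cne: "C \<noteq> {}" by auto
  define f where "f v = Re (ip K (mv K A v) v)" for v
  have "continuous_on UNIV f" unfolding f_def
    by (intro continuous_intros cont_ip cont_coord cont_mv)
  then have "continuous_on C f" by (rule continuous_on_subset) simp
  then obtain v0 where v0C: "v0 \<in> C" and v0max: "\<forall>y\<in>C. f y \<le> f v0"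
    using continuous_attains_sup[OF cC Cne] by blast
  define \<mu> where "\<mu> = f v0"
  have v0n: "ip K v0 v0 = 1" and v0W: "inW v0" using v0C unfolding C_def by auto
  have claim1: "f x \<le> \<mu> * Re (ip K x x)" if xW: "inW x" for x
  proof -
    define t where "t = Re (ip K x x)"
    have tsum: "t = (\<Sum>m\<in>K. (cmod (x m))\<^sup>2)" unfolding t_def by (rule ip_real)
    have t0: "t \<ge> 0" unfolding tsum by (simp add: sum_nonneg)
    show ?thesis
    proof (cases "t = 0")
      case True
      then have "ip K x x = 0" using ip_real(2)[of K x] t_def by simp
      then have "x a = 0" if "a \<in> K" for a using ip_self_zero[OF K] that by blast
      then have "ip K (mv K A x) x = 0" unfolding ip_def by simp
      then show ?thesis unfolding f_def t_def[symmetric] True by simp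
    next
      case False
      then have tp: "t > 0" using t0 by simp
      obtain c :: real where c: "c * c * t = 1"
      proof -
        have "(1 / sqrt t) * (1 / sqrt t) * t = 1" using tp
          by (simp add: power2_eq_square[symmetric] power_divide)
        then show ?thesis using that by blast
      qed
      define y where "y = (\<lambda>a. if a \<in> K then complex_of_real c * x a else 0)"
      have yS: "y \<in> S"
      proof -
        have "cmod (y a) \<le> 1" if a: "a \<in> K" for a
        proof -
          have "(cmod (x a))\<^sup>2 \<le> t" unfolding tsum
            by (rule member_le_sum) (use a K in auto)
          then have "(c * c) * (cmod (x a))\<^sup>2 \<le> (c * c) * t"
            by (intro mult_left_mono) auto
          then have "(cmod (y a))\<^sup>2 \<le> 1" using a c unfolding y_def
            by (simp add: norm_mult power_mult_distrib power2_eq_square mult_ac)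
          then show ?thesis by (simp add: power_le_one_iff abs_square_le_1)
        qed
        then show ?thesis unfolding S_def y_def by (auto simp: PiE_iff)
      qed
      have yy: "ip K y y = complex_of_real (c * c) * ip K x x"
      proof -
        have "ip K y y = ip K (\<lambda>a. complex_of_real c * x a) (\<lambda>a. complex_of_real c * x a)"
          unfolding y_def by (intro ip_cong) auto
        also have "\<dots> = complex_of_real (c * c) * ip K x x"
          unfolding ip_scale_left ip_scale_right by simp
        finally show ?thesis .
      qed
      have "ip K y y = 1" unfolding yy using c ip_real(2)[of K x] t_def
        by (metis of_real_1 of_real_mult)
      moreover have "inW y" unfolding inW_def
      proof (intro allI impI)
        fix k assume "k < n"
        have "ip K y (u k) = ip K (\<lambda>a. complex_of_real c * x a) (u k)"
          unfolding y_def by (intro ip_cong) auto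
        also have "\<dots> = 0" unfolding ip_scale_left using xW \<open>k < n\<close> inW_def by simp
        finally show "ip K y (u k) = 0" .
      qed
      ultimately have "y \<in> C" using yS unfolding C_def by auto
      then have fy: "f y \<le> \<mu>" using v0max \<mu>_def by blast
      have "mv K A y = (\<lambda>a. complex_of_real c * mv K A x a)"
        unfolding mv_def y_def by (auto simp: sum_distrib_left mult_ac intro!: sum.cong)
      then have "ip K (mv K A y) y = ip K (\<lambda>a. complex_of_real c * mv K A x a) (\<lambda>a. complex_of_real c * x a)"
        unfolding y_def by (intro ip_cong) auto
      also have "\<dots> = complex_of_real (c * c) * ip K (mv K A x) x"
        unfolding ip_scale_left ip_scale_right by simp
      finally have "f y = c * c * f x" unfolding f_def by simp
      then have "c * c * f x \<le> \<mu>" using fy by simp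
      then have "(c * c * f x) * t \<le> \<mu> * t" using tp by (intro mult_right_mono) auto
      moreover have "(c * c * f x) * t = (c * c * t) * f x" by (simp add: mult_ac)
      ultimately have "f x \<le> \<mu> * t" using c by simp
      then show ?thesis unfolding t_def .
    qed
  qed
  define B where "B x = (\<lambda>a. complex_of_real \<mu> * x a - mv K A x a)" for x
  define q where "q x = Re (ip K (B x) x)" for x
  have qf: "q x = \<mu> * Re (ip K x x) - f x" for x
    unfolding q_def B_def f_def ip_diff_left ip_scale_left by simp
  have qpos: "q x \<ge> 0" if "inW x" for x using claim1[OF that] qf by simp
  have qv0: "q v0 = 0" using qf v0n \<mu>_def by simp
  define w where "w = B v0"
  have wW: "inW w" unfolding inW_def
  proof (intro allI impI)
    fix k assume k: "k < n"
    have "ip K w (u k) = complex_of_real \<mu> * ip K v0 (u k) - ip K (mv K A v0) (u k)"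
      unfolding w_def B_def ip_diff_left ip_scale_left ..
    then show "ip K w (u k) = 0" using v0W inv[OF v0W] k unfolding inW_def by simp
  qed
  have quad: "2 * \<tau> * Re (ip K w w) + \<tau> * \<tau> * q w \<ge> 0" for \<tau> :: real
  proof -
    define x where "x = (\<lambda>a. v0 a + complex_of_real \<tau> * w a)"
    have "inW x" unfolding inW_def
    proof (intro allI impI)
      fix k assume k: "k < n"
      show "ip K x (u k) = 0" unfolding x_def ip_add_left using v0W wW k inW_def by simp
    qed
    then have qx: "q x \<ge> 0" by (rule qpos)
    have Bx: "B x = (\<lambda>a. B v0 a + complex_of_real \<tau> * B w a)"
      unfolding B_def x_def mv_lin by (simp add: algebra_simps)
    have herm2: "ip K (B w) v0 = ip K w (B v0)"
      unfolding B_def ip_diff_left ip_diff_right ip_scale_left ip_scale_right herm_ip[OF H] by simp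
    have "ip K (B x) x = ip K (B v0) v0 + complex_of_real \<tau> * ip K (B v0) w
       + complex_of_real \<tau> * ip K (B w) v0 + complex_of_real \<tau> * complex_of_real \<tau> * ip K (B w) w"
      unfolding Bx using ip_lin2[where f="B v0" and g="B w" and h=v0 and k=w and \<tau>=\<tau>] by (simp add: x_def)
    then have "q x = q v0 + \<tau> * Re (ip K w w) + \<tau> * Re (ip K w w) + \<tau> * \<tau> * q w"
      unfolding q_def herm2 w_def[symmetric] by simp
    then show ?thesis using qx qv0 by simp
  qed
  have "Re (ip K w w) = 0" by (rule quad_zero[OF qpos[OF wW]]) (use quad in auto)
  then have "ip K w w = 0" using ip_real(2)[of K w] by simp
  then have "w a = 0" if "a \<in> K" for a using ip_self_zero[OF K] that by blast
  then have "\<forall>a\<in>K. mv K A v0 a = complex_of_real \<mu> * v0 a" unfolding w_def B_def by simp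
  then show ?thesis using v0n v0W unfolding inW_def by blast
qed


lemma spec_upto:
  fixes A :: "'k \<Rightarrow> 'k \<Rightarrow> complex"
  assumes K: "finite K" and H: "herm K A"
  shows "n \<le> card K \<Longrightarrow> \<exists>u lam. onf K {..<n} u \<and>
     (\<forall>k<n. \<forall>a\<in>K. mv K A (u k) a = complex_of_real (lam k) * u k a)"
proof (induction n)
  case 0
  then show ?case by (auto simp: onf_def)
next
  case (Suc n)
  then obtain u lam where u: "onf K {..<n} u"
    and ev: "\<forall>k<n. \<forall>a\<in>K. mv K A (u k) a = complex_of_real (lam k) * u k a" by auto
  obtain v \<mu> where v: "ip K v v = 1" "\<forall>k<n. ip K v (u k) = 0"
     "\<forall>a\<in>K. mv K A v a = complex_of_real \<mu> * v a"
    using spec_step[OF K H u ev] Suc.prems by auto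
  define u' where "u' = u(n := v)"
  define lam' where "lam' = lam(n := \<mu>)"
  have "onf K {..<Suc n} u'"
    unfolding onf_def
  proof (intro ballI)
    fix k l assume k: "k \<in> {..<Suc n}" and l: "l \<in> {..<Suc n}"
    show "ip K (u' k) (u' l) = (if k = l then 1 else 0)"
    proof (cases "k = n"; cases "l = n")
      assume "k = n" "l = n" then show ?thesis using v unfolding u'_def by simp
    next
      assume "k = n" "l \<noteq> n" then show ?thesis using v l unfolding u'_def by simp
    next
      assume "k \<noteq> n" "l = n" then show ?thesis using v k unfolding u'_def
        by (subst ip_conj) simp
    next
      assume "k \<noteq> n" "l \<noteq> n" then show ?thesis using u k l unfolding u'_def onf_def by simp
    qed
  qed
  moreover have "\<forall>k<Suc n. \<forall>a\<in>K. mv K A (u' k) a = complex_of_real (lam' k) * u' k a"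
    using ev v unfolding u'_def lam'_def by (auto simp: less_Suc_eq)
  ultimately show ?case by blast
qed

theorem spectral:
  fixes A :: "'k \<Rightarrow> 'k \<Rightarrow> complex"
  assumes K: "finite K" and H: "herm K A"
  shows "\<exists>u lam. orthonormal_eigenbasis K A u lam"
proof -
  obtain u lam where u: "onf K {..<card K} u"
    and ev: "\<forall>k<card K. \<forall>a\<in>K. mv K A (u k) a = complex_of_real (lam k) * u k a"
    using spec_upto[OF K H, of "card K"] by auto
  obtain g where g: "bij_betw g K {0..<card K}" using ex_bij_betw_finite_nat[OF K] by blast
  have gK: "g k < card K" if "k \<in> K" for k using g that by (auto dest: bij_betwE)
  have ginj: "g k = g l \<longleftrightarrow> k = l" if "k \<in> K" "l \<in> K" for k l
    using g that by (auto simp: bij_betw_def inj_on_def)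
  have "orthonormal_eigenbasis K A (\<lambda>k. u (g k)) (\<lambda>k. lam (g k))"
    unfolding orthonormal_eigenbasis_def
  proof (intro conjI ballI)
    fix k l assume k: "k \<in> K" and l: "l \<in> K"
    have "ip K (u (g k)) (u (g l)) = (if g k = g l then 1 else 0)"
      using u gK[OF k] gK[OF l] unfolding onf_def by simp
    then show "(\<Sum>m\<in>K. u (g k) m * cnj (u (g l) m)) = (if k = l then 1 else 0)"
      unfolding ip_def using ginj[OF k l] by simp
  next
    fix k a assume k: "k \<in> K" and a: "a \<in> K"
    show "(\<Sum>b\<in>K. A a b * u (g k) b) = complex_of_real (lam (g k)) * u (g k) a"
      using ev gK[OF k] a unfolding mv_def by simp
  qed
  then show ?thesis by blast
qed



definition xlnx :: "real \<Rightarrow> real" where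
  "xlnx t = (if t = 0 then 0 else t * ln t)"

lemma gibbs_pt:
  fixes x y :: real assumes x: "x > 0" and y: "y > 0"
  shows "x * ln x - x * ln y \<ge> x - y"
    and "x * ln x - x * ln y = x - y \<Longrightarrow> x = y"
proof -
  have l: "ln (y / x) \<le> y / x - 1" using x y by (intro ln_le_minus_one) simp
  have e: "ln (y / x) = ln y - ln x" using x y by (simp add: ln_divide_pos)
  have "x * (ln y - ln x) \<le> x * (y / x - 1)" using l e x by (intro mult_left_mono) auto
  then show "x * ln x - x * ln y \<ge> x - y" using x by (simp add: algebra_simps)
  assume eq: "x * ln x - x * ln y = x - y"
  then have "x * (ln y - ln x) = x * (y / x - 1)" using x by (simp add: algebra_simps)
  then have "ln (y / x) = y / x - 1" using x e by simp
  then have "y / x = 1" using x y by (intro ln_eq_minus_one) auto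
  then show "x = y" using x by simp
qed

lemma xlnx_sum:
  fixes D :: "'k \<Rightarrow> real" and m :: "'k \<Rightarrow> real"
  assumes I: "finite I" and nn: "\<forall>k\<in>I. D k * m k \<ge> 0"
  shows "(\<Sum>k\<in>I. D k * m k * ln (\<Sum>k\<in>I. D k * m k)) = xlnx (\<Sum>k\<in>I. D k * m k)"
proof (cases "(\<Sum>k\<in>I. D k * m k) = 0")
  case True
  then have "\<forall>k\<in>I. D k * m k = 0" using I nn by (simp add: sum_nonneg_eq_0_iff)
  then show ?thesis using True by (simp add: xlnx_def)
next
  case False
  then show ?thesis by (simp add: xlnx_def sum_distrib_right)
qed

lemma doubly_stochastic_entropy:
  fixes D :: "'l \<Rightarrow> 'k \<Rightarrow> real" and \<mu> :: "'k \<Rightarrow> real"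
  assumes I1: "finite I1" and I2: "finite I2"
    and D0: "\<forall>l\<in>I2. \<forall>k\<in>I1. D l k \<ge> 0"
    and col: "\<forall>k\<in>I1. (\<Sum>l\<in>I2. D l k) = 1"
    and row: "\<forall>l\<in>I2. (\<Sum>k\<in>I1. D l k) = 1"
    and \<mu>0: "\<forall>k\<in>I1. \<mu> k \<ge> 0"
  shows "(\<Sum>l\<in>I2. xlnx (\<Sum>k\<in>I1. D l k * \<mu> k)) \<le> (\<Sum>k\<in>I1. xlnx (\<mu> k))"
proof -
  define p where "p l = (\<Sum>k\<in>I1. D l k * \<mu> k)" for l
  have p1: "xlnx (p l) = (\<Sum>k\<in>I1. D l k * \<mu> k * ln (p l))" if l: "l \<in> I2" for l
    unfolding p_def using xlnx_sum[OF I1, of "D l" \<mu>] D0 \<mu>0 l by simp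
  have s1: "(\<Sum>k\<in>I1. xlnx (\<mu> k)) = (\<Sum>l\<in>I2. \<Sum>k\<in>I1. D l k * xlnx (\<mu> k))"
  proof -
    have "(\<Sum>l\<in>I2. \<Sum>k\<in>I1. D l k * xlnx (\<mu> k)) = (\<Sum>k\<in>I1. \<Sum>l\<in>I2. D l k * xlnx (\<mu> k))"
      by (rule sum.swap)
    also have "\<dots> = (\<Sum>k\<in>I1. xlnx (\<mu> k))"
      using col by (simp add: sum_distrib_right[symmetric])
    finally show ?thesis by simp
  qed
  have pt: "D l k * xlnx (\<mu> k) - D l k * \<mu> k * ln (p l) \<ge> D l k * \<mu> k - D l k * p l"
    if l: "l \<in> I2" and k: "k \<in> I1" for l k
  proof -
    have Dl: "D l k \<ge> 0" using D0 l k by auto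
    have pge: "p l \<ge> D l k * \<mu> k" unfolding p_def
      using member_le_sum[of k I1 "\<lambda>k. D l k * \<mu> k"] D0 \<mu>0 l k I1 by auto
    have p0: "p l \<ge> 0" unfolding p_def using D0 \<mu>0 l by (auto intro!: sum_nonneg)
    show ?thesis
    proof (cases "\<mu> k = 0 \<or> D l k = 0")
      case True
      then show ?thesis using Dl p0 by (auto simp: xlnx_def)
    next
      case False
      then have mk: "\<mu> k > 0" and Dp: "D l k > 0" using \<mu>0 k Dl by auto
      then have pp: "p l > 0" using pge by (smt (verit) mult_pos_pos)
      have "\<mu> k * ln (\<mu> k) - \<mu> k * ln (p l) \<ge> \<mu> k - p l" by (rule gibbs_pt(1)[OF mk pp])
      then have "D l k * (\<mu> k * ln (\<mu> k) - \<mu> k * ln (p l)) \<ge> D l k * (\<mu> k - p l)"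
        using Dl by (intro mult_left_mono) auto
      then show ?thesis using mk by (simp add: xlnx_def algebra_simps)
    qed
  qed
  have "(\<Sum>l\<in>I2. \<Sum>k\<in>I1. D l k * \<mu> k - D l k * p l) \<le>
        (\<Sum>l\<in>I2. \<Sum>k\<in>I1. D l k * xlnx (\<mu> k) - D l k * \<mu> k * ln (p l))"
    using pt by (intro sum_mono) auto
  moreover have "(\<Sum>l\<in>I2. \<Sum>k\<in>I1. D l k * \<mu> k - D l k * p l) = 0"
  proof -
    have a: "(\<Sum>l\<in>I2. \<Sum>k\<in>I1. D l k * \<mu> k) = (\<Sum>k\<in>I1. \<mu> k)"
    proof -
      have "(\<Sum>l\<in>I2. \<Sum>k\<in>I1. D l k * \<mu> k) = (\<Sum>k\<in>I1. \<Sum>l\<in>I2. D l k * \<mu> k)" by (rule sum.swap)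
      also have "\<dots> = (\<Sum>k\<in>I1. \<mu> k)" using col by (simp add: sum_distrib_right[symmetric])
      finally show ?thesis .
    qed
    have b: "(\<Sum>l\<in>I2. \<Sum>k\<in>I1. D l k * p l) = (\<Sum>l\<in>I2. p l)"
      using row by (simp add: sum_distrib_right[symmetric])
    have c: "(\<Sum>l\<in>I2. p l) = (\<Sum>k\<in>I1. \<mu> k)" unfolding p_def using a .
    show ?thesis using a b c by (simp add: sum_subtractf)
  qed
  moreover have "(\<Sum>l\<in>I2. \<Sum>k\<in>I1. D l k * xlnx (\<mu> k) - D l k * \<mu> k * ln (p l)) =
      (\<Sum>k\<in>I1. xlnx (\<mu> k)) - (\<Sum>l\<in>I2. xlnx (p l))"
    using s1 p1 by (simp add: sum_subtractf)
  ultimately show ?thesis unfolding p_def by simp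
qed





lemma classical_indep:
  fixes p :: "'a \<Rightarrow> 'b \<Rightarrow> real"
  assumes A: "finite A" and B: "finite B"
    and p0: "\<forall>a\<in>A. \<forall>b\<in>B. p a b \<ge> 0"
    and tot: "(\<Sum>a\<in>A. \<Sum>b\<in>B. p a b) = 1"
    and H: "(\<Sum>a\<in>A. \<Sum>b\<in>B. xlnx (p a b)) \<le>
            (\<Sum>a\<in>A. xlnx (\<Sum>b\<in>B. p a b)) + (\<Sum>b\<in>B. xlnx (\<Sum>a\<in>A. p a b))"
  shows "\<forall>a\<in>A. \<forall>b\<in>B. p a b = (\<Sum>b\<in>B. p a b) * (\<Sum>a\<in>A. p a b)"
proof -
  define q where "q a = (\<Sum>b\<in>B. p a b)" for a
  define r where "r b = (\<Sum>a\<in>A. p a b)" for b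
  have q0: "q a \<ge> 0" if "a \<in> A" for a unfolding q_def using p0 that by (auto intro!: sum_nonneg)
  have r0: "r b \<ge> 0" if "b \<in> B" for b unfolding r_def using p0 that by (auto intro!: sum_nonneg)
  have pq: "p a b \<le> q a" if "a \<in> A" "b \<in> B" for a b
    unfolding q_def using member_le_sum[of b B "p a"] p0 that B by auto
  have pr: "p a b \<le> r b" if "a \<in> A" "b \<in> B" for a b
    unfolding r_def using member_le_sum[of a A "\<lambda>a. p a b"] p0 that A by auto
  have hq: "xlnx (q a) = (\<Sum>b\<in>B. p a b * ln (q a))" if "a \<in> A" for a
    using xlnx_sum[OF B, of "p a" "\<lambda>_. 1"] p0 that unfolding q_def by simp
  have hr: "xlnx (r b) = (\<Sum>a\<in>A. p a b * ln (r b))" if "b \<in> B" for b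
    using xlnx_sum[OF A, of "\<lambda>a. p a b" "\<lambda>_. 1"] p0 that unfolding r_def by simp
  define G where "G a b = xlnx (p a b) - p a b * ln (q a) - p a b * ln (r b)" for a b
  have sumG: "(\<Sum>a\<in>A. \<Sum>b\<in>B. G a b) \<le> 0"
  proof -
    have "(\<Sum>a\<in>A. xlnx (q a)) = (\<Sum>a\<in>A. \<Sum>b\<in>B. p a b * ln (q a))" using hq by simp
    moreover have "(\<Sum>b\<in>B. xlnx (r b)) = (\<Sum>a\<in>A. \<Sum>b\<in>B. p a b * ln (r b))"
      using hr by (simp add: sum.swap[of _ B])
    ultimately show ?thesis using H unfolding G_def q_def[symmetric] r_def[symmetric]
      by (simp add: sum_subtractf)
  qed
  have ptG: "G a b \<ge> p a b - q a * r b" if a: "a \<in> A" and b: "b \<in> B" for a b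
  proof (cases "p a b = 0")
    case True then show ?thesis using q0[OF a] r0[OF b] by (simp add: G_def xlnx_def)
  next
    case False
    then have pp: "p a b > 0" using p0 a b by force
    then have qp: "q a > 0" and rp: "r b > 0" using pq[OF a b] pr[OF a b] by auto
    have lm: "ln (q a * r b) = ln (q a) + ln (r b)" using qp rp by (rule ln_mult_pos)
    have "p a b * ln (p a b) - p a b * ln (q a * r b) \<ge> p a b - q a * r b"
      using gibbs_pt(1)[OF pp, of "q a * r b"] qp rp by simp
    moreover have "G a b = p a b * ln (p a b) - p a b * ln (q a * r b)"
      unfolding G_def xlnx_def lm using pp by (simp add: distrib_left)
    ultimately show ?thesis by simp
  qed
  have sum0: "(\<Sum>a\<in>A. \<Sum>b\<in>B. p a b - q a * r b) = 0"
  proof -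
    have "(\<Sum>a\<in>A. \<Sum>b\<in>B. q a * r b) = (\<Sum>a\<in>A. q a) * (\<Sum>b\<in>B. r b)"
      by (simp add: sum_product)
    moreover have "(\<Sum>a\<in>A. q a) = 1" using tot q_def by simp
    moreover have "(\<Sum>b\<in>B. r b) = 1" using tot unfolding r_def by (simp add: sum.swap[of _ B])
    ultimately show ?thesis using tot by (simp add: sum_subtractf)
  qed
  have "(\<Sum>a\<in>A. \<Sum>b\<in>B. G a b - (p a b - q a * r b)) = 0"
  proof -
    have "(\<Sum>a\<in>A. \<Sum>b\<in>B. G a b - (p a b - q a * r b)) =
      (\<Sum>a\<in>A. \<Sum>b\<in>B. G a b) - (\<Sum>a\<in>A. \<Sum>b\<in>B. p a b - q a * r b)"
      by (simp add: sum_subtractf)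
    moreover have "(\<Sum>a\<in>A. \<Sum>b\<in>B. G a b - (p a b - q a * r b)) \<ge> 0"
      using ptG by (intro sum_nonneg) auto
    ultimately show ?thesis using sumG sum0 by simp
  qed
  then have allz: "\<forall>a\<in>A. (\<Sum>b\<in>B. G a b - (p a b - q a * r b)) = 0"
    using A ptG by (subst (asm) sum_nonneg_eq_0_iff) (auto intro!: sum_nonneg)
  have eqG: "G a b = p a b - q a * r b" if a: "a \<in> A" and b: "b \<in> B" for a b
  proof -
    have "(\<Sum>b\<in>B. G a b - (p a b - q a * r b)) = 0" using allz a by blast
    moreover have "\<forall>b\<in>B. G a b - (p a b - q a * r b) \<ge> 0" using ptG a by auto
    ultimately have "\<forall>b\<in>B. G a b - (p a b - q a * r b) = 0" using sum_nonneg_eq_0_iff[OF B, of "\<lambda>b. G a b - (p a b - q a * r b)"] by blast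
    then show ?thesis using b by simp
  qed
  have "p a b = q a * r b" if a: "a \<in> A" and b: "b \<in> B" for a b
  proof (cases "p a b = 0")
    case True
    then show ?thesis using eqG[OF a b] by (simp add: G_def xlnx_def)
  next
    case False
    then have pp: "p a b > 0" using p0 a b by force
    then have qp: "q a > 0" and rp: "r b > 0" using pq[OF a b] pr[OF a b] by auto
    have lm: "ln (q a * r b) = ln (q a) + ln (r b)" using qp rp by (rule ln_mult_pos)
    have "G a b = p a b * ln (p a b) - p a b * ln (q a * r b)"
      unfolding G_def xlnx_def lm using pp by (simp add: distrib_left)
    then have "p a b * ln (p a b) - p a b * ln (q a * r b) = p a b - q a * r b"
      using eqG[OF a b] by simp
    then show ?thesis using gibbs_pt(2)[OF pp] qp rp by simp
  qed
  then show ?thesis unfolding q_def r_def by blast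
qed




lemma expand:
  assumes K: "finite K" and I: "finite I" and u: "onf K I u" and c: "card I = card K" and b: "b \<in> K"
  shows "v b = (\<Sum>k\<in>I. ip K v (u k) * u k b)"
proof -
  have "(\<Sum>k\<in>I. ip K v (u k) * u k b) = (\<Sum>k\<in>I. \<Sum>a\<in>K. v a * (cnj (u k a) * u k b))"
    unfolding ip_def by (simp add: sum_distrib_left sum_distrib_right mult_ac)
  also have "\<dots> = (\<Sum>a\<in>K. \<Sum>k\<in>I. v a * (cnj (u k a) * u k b))" by (rule sum.swap)
  also have "\<dots> = (\<Sum>a\<in>K. v a * (if b = a then 1 else 0))"
    using onf_complete[OF K I u c _ b] by (simp add: sum_distrib_left[symmetric])
  also have "\<dots> = v b" using K b by (simp add: if_distrib[of "\<lambda>x. v _ * x"] cong: if_cong)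
  finally show ?thesis by simp
qed

lemma parseval:
  assumes K: "finite K" and I: "finite I" and u: "onf K I u" and c: "card I = card K"
  shows "(\<Sum>k\<in>I. (cmod (ip K v (u k)))\<^sup>2) = Re (ip K v v)"
proof -
  have "ip K v v = ip K (\<lambda>b. \<Sum>k\<in>I. ip K v (u k) * u k b) v"
    using expand[OF K I u c] by (intro ip_cong) auto
  also have "\<dots> = (\<Sum>k\<in>I. ip K v (u k) * ip K (u k) v)" by (rule ip_sum_left)
  also have "\<dots> = (\<Sum>k\<in>I. complex_of_real ((cmod (ip K v (u k)))\<^sup>2))"
    by (subst (2) ip_conj) (simp add: mult_cnj_cmod)
  finally show ?thesis by simp
qed

lemma quad_expand:
  assumes K: "finite K" and I: "finite I" and u: "onf K I u" and c: "card I = card K"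
    and ev: "\<forall>k\<in>I. \<forall>a\<in>K. mv K A (u k) a = complex_of_real (\<mu> k) * u k a"
  shows "Re (ip K (mv K A w) w) = (\<Sum>k\<in>I. \<mu> k * (cmod (ip K w (u k)))\<^sup>2)"
proof -
  have mvw: "mv K A w a = (\<Sum>k\<in>I. (ip K w (u k) * complex_of_real (\<mu> k)) * u k a)" if a: "a \<in> K" for a
  proof -
    have "mv K A w a = (\<Sum>b\<in>K. A a b * (\<Sum>k\<in>I. ip K w (u k) * u k b))"
      unfolding mv_def using expand[OF K I u c] by (intro sum.cong refl) auto
    also have "\<dots> = (\<Sum>k\<in>I. ip K w (u k) * mv K A (u k) a)"
      unfolding mv_def by (simp add: sum_distrib_left mult_ac sum.swap[of _ K])
    also have "\<dots> = (\<Sum>k\<in>I. (ip K w (u k) * complex_of_real (\<mu> k)) * u k a)"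
      using ev a by (intro sum.cong refl) auto
    finally show ?thesis .
  qed
  have "ip K (mv K A w) w = ip K (\<lambda>a. \<Sum>k\<in>I. (ip K w (u k) * complex_of_real (\<mu> k)) * u k a) w"
    using mvw by (intro ip_cong) auto
  also have "\<dots> = (\<Sum>k\<in>I. (ip K w (u k) * complex_of_real (\<mu> k)) * ip K (u k) w)" by (rule ip_sum_left)
  also have "\<dots> = (\<Sum>k\<in>I. complex_of_real (\<mu> k * (cmod (ip K w (u k)))\<^sup>2))"
    by (subst (2) ip_conj) (simp add: mult_cnj_cmod mult_ac)
  finally show ?thesis by simp
qed

lemma diag_le:
  assumes K: "finite K" and I1: "finite I1" and I2: "finite I2"
    and c1: "card I1 = card K" and c2: "card I2 = card K"
    and u: "onf K I1 u"
    and ev: "\<forall>k\<in>I1. \<forall>a\<in>K. mv K A (u k) a = complex_of_real (\<mu> k) * u k a"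
    and \<mu>0: "\<forall>k\<in>I1. \<mu> k \<ge> 0"
    and w: "onf K I2 w"
  shows "(\<Sum>l\<in>I2. xlnx (Re (ip K (mv K A (w l)) (w l)))) \<le> (\<Sum>k\<in>I1. xlnx (\<mu> k))"
proof -
  define D where "D l k = (cmod (ip K (w l) (u k)))\<^sup>2" for l k
  have row: "\<forall>l\<in>I2. (\<Sum>k\<in>I1. D l k) = 1"
  proof
    fix l assume l: "l \<in> I2"
    have "ip K (w l) (w l) = 1" using w l by (simp add: onf_def)
    then show "(\<Sum>k\<in>I1. D l k) = 1" unfolding D_def parseval[OF K I1 u c1] by simp
  qed
  have col: "\<forall>k\<in>I1. (\<Sum>l\<in>I2. D l k) = 1"
  proof
    fix k assume k: "k \<in> I1"
    have "ip K (u k) (u k) = 1" using u k by (simp add: onf_def)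
    moreover have "D l k = (cmod (ip K (u k) (w l)))\<^sup>2" for l
      unfolding D_def by (subst ip_conj) simp
    ultimately show "(\<Sum>l\<in>I2. D l k) = 1" using parseval[OF K I2 w c2, of "u k"] by simp
  qed
  have "Re (ip K (mv K A (w l)) (w l)) = (\<Sum>k\<in>I1. D l k * \<mu> k)" for l
    unfolding quad_expand[OF K I1 u c1 ev] D_def by (simp add: mult_ac)
  moreover have "(\<Sum>l\<in>I2. xlnx (\<Sum>k\<in>I1. D l k * \<mu> k)) \<le> (\<Sum>k\<in>I1. xlnx (\<mu> k))"
    by (rule doubly_stochastic_entropy[OF I1 I2 _ col row \<mu>0]) (simp add: D_def)
  ultimately show ?thesis by simp
qed




definition mrg :: "nat set \<Rightarrow> (nat \<Rightarrow> nat) \<Rightarrow> (nat \<Rightarrow> nat) \<Rightarrow> nat \<Rightarrow> nat" where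
  "mrg S y w = (\<lambda>i. if i \<in> S then y i else w i)"

lemma mrg_PiE:
  assumes "S \<subseteq> U" "y \<in> PiE S B" "w \<in> PiE (U - S) B"
  shows "mrg S y w \<in> PiE U B"
  using assms unfolding mrg_def PiE_def Pi_def extensional_def by auto

lemma restrict_mrg1: "restrict (mrg S y w) S = y" if "y \<in> PiE S B"
  using that unfolding mrg_def by (auto simp: PiE_def extensional_def fun_eq_iff)

lemma restrict_mrg2: "restrict (mrg S y w) (U - S) = w" if "w \<in> PiE (U - S) B"
  using that unfolding mrg_def by (auto simp: PiE_def extensional_def fun_eq_iff)

lemma mrg_restrict: "mrg S (restrict x S) (restrict x (U - S)) = x" if "x \<in> PiE U B" "S \<subseteq> U"
  using that unfolding mrg_def by (auto simp: PiE_def extensional_def fun_eq_iff)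


lemma split_bij:
  assumes "S \<subseteq> U"
  shows "bij_betw (\<lambda>(y, w). mrg S y w) (PiE S B \<times> PiE (U - S) B) (PiE U B)"
proof (rule bij_betw_byWitness[where f' = "\<lambda>x. (restrict x S, restrict x (U - S))"])
  show "\<forall>a\<in>PiE S B \<times> PiE (U - S) B. (\<lambda>x. (restrict x S, restrict x (U - S))) ((\<lambda>(y, w). mrg S y w) a) = a"
  proof
    fix a assume "a \<in> PiE S B \<times> PiE (U - S) B"
    then obtain y w where a: "a = (y, w)" and y: "y \<in> PiE S B" and w: "w \<in> PiE (U - S) B" by auto
    show "(\<lambda>x. (restrict x S, restrict x (U - S))) ((\<lambda>(y, w). mrg S y w) a) = a"
      unfolding a using restrict_mrg1[OF y] restrict_mrg2[OF w] by simp
  qed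
  show "\<forall>a'\<in>PiE U B. (\<lambda>(y, w). mrg S y w) ((\<lambda>x. (restrict x S, restrict x (U - S))) a') = a'"
  proof
    fix x assume x: "x \<in> PiE U B"
    show "(\<lambda>(y, w). mrg S y w) ((\<lambda>x. (restrict x S, restrict x (U - S))) x) = x"
      using mrg_restrict[OF x assms] by simp
  qed
  show "(\<lambda>(y, w). mrg S y w) ` (PiE S B \<times> PiE (U - S) B) \<subseteq> PiE U B"
  proof
    fix x assume "x \<in> (\<lambda>(y, w). mrg S y w) ` (PiE S B \<times> PiE (U - S) B)"
    then obtain y w where x: "x = mrg S y w" and y: "y \<in> PiE S B" and w: "w \<in> PiE (U - S) B" by auto
    show "x \<in> PiE U B" unfolding x by (rule mrg_PiE[OF assms y w])
  qed
  show "(\<lambda>x. (restrict x S, restrict x (U - S))) ` PiE U B \<subseteq> PiE S B \<times> PiE (U - S) B"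
  proof
    fix z assume "z \<in> (\<lambda>x. (restrict x S, restrict x (U - S))) ` PiE U B"
    then obtain x where x: "x \<in> PiE U B" and z: "z = (restrict x S, restrict x (U - S))" by auto
    have "restrict x S \<in> PiE S B" unfolding restrict_PiE_iff using PiE_mem[OF x] assms by blast
    moreover have "restrict x (U - S) \<in> PiE (U - S) B" unfolding restrict_PiE_iff using PiE_mem[OF x] by blast
    ultimately show "z \<in> PiE S B \<times> PiE (U - S) B" unfolding z by blast
  qed
qed


lemma sum_split:
  assumes "S \<subseteq> U" "finite U" "\<And>i. finite (B i)"
  shows "(\<Sum>x\<in>PiE U B. f x) = (\<Sum>y\<in>PiE S B. \<Sum>w\<in>PiE (U - S) B. f (mrg S y w))"
proof -
  have "(\<Sum>x\<in>PiE U B. f x) = (\<Sum>p\<in>PiE S B \<times> PiE (U - S) B. f ((\<lambda>(y, w). mrg S y w) p))"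
    using sum.reindex_bij_betw[OF split_bij[OF assms(1)], of f] by simp
  also have "\<dots> = (\<Sum>y\<in>PiE S B. \<Sum>w\<in>PiE (U - S) B. f (mrg S y w))"
    by (subst sum.cartesian_product) (simp add: case_prod_beta)
  finally show ?thesis .
qed

lemma fiber_bij:
  assumes "S \<subseteq> U" "y \<in> PiE S B"
  shows "bij_betw (mrg S y) (PiE (U - S) B) {x \<in> PiE U B. restrict x S = y}"
proof (rule bij_betw_byWitness[where f' = "\<lambda>x. restrict x (U - S)"])
  show "\<forall>a\<in>PiE (U - S) B. restrict (mrg S y a) (U - S) = a"
  proof
    fix a assume "a \<in> PiE (U - S) B"
    then show "restrict (mrg S y a) (U - S) = a" by (rule restrict_mrg2)
  qed
  show "\<forall>a'\<in>{x \<in> PiE U B. restrict x S = y}. mrg S y (restrict a' (U - S)) = a'"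
  proof
    fix a' assume "a' \<in> {x \<in> PiE U B. restrict x S = y}"
    then have a1: "a' \<in> PiE U B" and a2: "restrict a' S = y" by auto
    have "mrg S (restrict a' S) (restrict a' (U - S)) = a'" by (rule mrg_restrict[OF a1 assms(1)])
    then show "mrg S y (restrict a' (U - S)) = a'" unfolding a2 .
  qed
  show "mrg S y ` PiE (U - S) B \<subseteq> {x \<in> PiE U B. restrict x S = y}"
  proof
    fix x assume "x \<in> mrg S y ` PiE (U - S) B"
    then obtain w where w: "w \<in> PiE (U - S) B" and x: "x = mrg S y w" by auto
    show "x \<in> {x \<in> PiE U B. restrict x S = y}"
      using mrg_PiE[OF assms(1,2) w] restrict_mrg1[OF assms(2)] x by simp
  qed
  show "(\<lambda>x. restrict x (U - S)) ` {x \<in> PiE U B. restrict x S = y} \<subseteq> PiE (U - S) B"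
  proof
    fix z assume "z \<in> (\<lambda>x. restrict x (U - S)) ` {x \<in> PiE U B. restrict x S = y}"
    then obtain x where x: "x \<in> PiE U B" and z: "z = restrict x (U - S)" by auto
    show "z \<in> PiE (U - S) B" unfolding z restrict_PiE_iff using PiE_mem[OF x] by blast
  qed
qed

lemma sum_fiber:
  assumes "S \<subseteq> U" "y \<in> PiE S B"
  shows "(\<Sum>x\<in>{x \<in> PiE U B. restrict x S = y}. f x) = (\<Sum>w\<in>PiE (U - S) B. f (mrg S y w))"
  by (rule sum.reindex_bij_betw[OF fiber_bij[OF assms], symmetric])



lemma reduced_gram:
  assumes S: "S \<subseteq> {..<N}" and y: "y \<in> PiE S (\<lambda>i. {..<d i})" and z: "z \<in> PiE S (\<lambda>i. {..<d i})"
  shows "Defs.reduced N d V S y z =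
    (\<Sum>w\<in>PiE ({..<N} - S) (\<lambda>i. {..<d i}). V (mrg S y w) * cnj (V (mrg S z w)))"
proof -
  have "Defs.reduced N d V S y z = (\<Sum>w\<in>PiE ({..<N} - S) (\<lambda>i. {..<d i}).
      V (mrg S y w) * cnj (V (\<lambda>i. if i \<in> S then z i else mrg S y w i)))"
    unfolding Defs.reduced_def configs_def by (rule sum_fiber[OF S y])
  also have "\<dots> = (\<Sum>w\<in>PiE ({..<N} - S) (\<lambda>i. {..<d i}). V (mrg S y w) * cnj (V (mrg S z w)))"
  proof (rule sum.cong[OF refl])
    fix w
    have "(\<lambda>i. if i \<in> S then z i else mrg S y w i) = mrg S z w" unfolding mrg_def by auto
    then show "V (mrg S y w) * cnj (V (\<lambda>i. if i \<in> S then z i else mrg S y w i)) =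
      V (mrg S y w) * cnj (V (mrg S z w))" by simp
  qed
  finally show ?thesis .
qed

lemma reduced_herm:
  assumes S: "S \<subseteq> {..<N}"
  shows "herm (PiE S (\<lambda>i. {..<d i})) (Defs.reduced N d V S)"
  unfolding herm_def
proof (intro ballI)
  fix a b assume a: "a \<in> PiE S (\<lambda>i. {..<d i})" and b: "b \<in> PiE S (\<lambda>i. {..<d i})"
  show "Defs.reduced N d V S a b = cnj (Defs.reduced N d V S b a)"
    unfolding reduced_gram[OF S a b] reduced_gram[OF S b a] by (simp add: mult.commute)
qed

lemma reduced_quad:
  fixes N :: nat and d :: "nat \<Rightarrow> nat" and V :: "(nat \<Rightarrow> nat) \<Rightarrow> complex" and f :: "(nat \<Rightarrow> nat) \<Rightarrow> complex"
  assumes S: "S \<subseteq> {..<N}"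
  defines "K \<equiv> PiE S (\<lambda>i. {..<d i})"
  shows "ip K (mv K (Defs.reduced N d V S) f) f = complex_of_real
    (\<Sum>w\<in>PiE ({..<N} - S) (\<lambda>i. {..<d i}). (cmod (\<Sum>y\<in>K. V (mrg S y w) * cnj (f y)))\<^sup>2)"
proof -
  define C where "C = PiE ({..<N} - S) (\<lambda>i. {..<d i})"
  have "ip K (mv K (Defs.reduced N d V S) f) f =
      (\<Sum>y\<in>K. \<Sum>z\<in>K. \<Sum>w\<in>C. V (mrg S y w) * cnj (V (mrg S z w)) * f z * cnj (f y))"
    unfolding ip_def mv_def
  proof (rule sum.cong[OF refl])
    fix y assume y: "y \<in> K"
    have "(\<Sum>z\<in>K. Defs.reduced N d V S y z * f z) =
      (\<Sum>z\<in>K. \<Sum>w\<in>C. V (mrg S y w) * cnj (V (mrg S z w)) * f z)"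
    proof (rule sum.cong[OF refl])
      fix z assume z: "z \<in> K"
      show "Defs.reduced N d V S y z * f z = (\<Sum>w\<in>C. V (mrg S y w) * cnj (V (mrg S z w)) * f z)"
        unfolding reduced_gram[OF S y[unfolded K_def] z[unfolded K_def]] C_def
        by (simp add: sum_distrib_right)
    qed
    then show "(\<Sum>z\<in>K. Defs.reduced N d V S y z * f z) * cnj (f y) =
      (\<Sum>z\<in>K. \<Sum>w\<in>C. V (mrg S y w) * cnj (V (mrg S z w)) * f z * cnj (f y))"
      by (simp add: sum_distrib_right)
  qed
  also have "\<dots> = (\<Sum>w\<in>C. \<Sum>y\<in>K. \<Sum>z\<in>K. V (mrg S y w) * cnj (V (mrg S z w)) * f z * cnj (f y))"
  proof -
    have "(\<Sum>y\<in>K. \<Sum>z\<in>K. \<Sum>w\<in>C. V (mrg S y w) * cnj (V (mrg S z w)) * f z * cnj (f y)) =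
      (\<Sum>y\<in>K. \<Sum>w\<in>C. \<Sum>z\<in>K. V (mrg S y w) * cnj (V (mrg S z w)) * f z * cnj (f y))"
      by (rule sum.cong[OF refl]) (rule sum.swap)
    also have "\<dots> = (\<Sum>w\<in>C. \<Sum>y\<in>K. \<Sum>z\<in>K. V (mrg S y w) * cnj (V (mrg S z w)) * f z * cnj (f y))"
      by (rule sum.swap)
    finally show ?thesis .
  qed
  also have "\<dots> = (\<Sum>w\<in>C. (\<Sum>y\<in>K. V (mrg S y w) * cnj (f y)) * cnj (\<Sum>y\<in>K. V (mrg S y w) * cnj (f y)))"
  proof (rule sum.cong[OF refl])
    fix w
    have "(\<Sum>y\<in>K. V (mrg S y w) * cnj (f y)) * cnj (\<Sum>y\<in>K. V (mrg S y w) * cnj (f y)) =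
       (\<Sum>y\<in>K. V (mrg S y w) * cnj (f y)) * (\<Sum>z\<in>K. cnj (V (mrg S z w)) * f z)"
      by (simp add: cnj_sum)
    also have "\<dots> = (\<Sum>y\<in>K. \<Sum>z\<in>K. (V (mrg S y w) * cnj (f y)) * (cnj (V (mrg S z w)) * f z))"
      by (rule sum_product)
    finally show "(\<Sum>y\<in>K. \<Sum>z\<in>K. V (mrg S y w) * cnj (V (mrg S z w)) * f z * cnj (f y)) =
      (\<Sum>y\<in>K. V (mrg S y w) * cnj (f y)) * cnj (\<Sum>y\<in>K. V (mrg S y w) * cnj (f y))"
      by (simp only: mult_ac)
  qed
  also have "\<dots> = (\<Sum>w\<in>C. complex_of_real ((cmod (\<Sum>y\<in>K. V (mrg S y w) * cnj (f y)))\<^sup>2))"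
    by (simp only: mult_cnj_cmod)
  finally show ?thesis unfolding C_def by simp
qed

lemma oeb_onf:
  assumes "orthonormal_eigenbasis K A u lam"
  shows "onf K K u" and "\<forall>k\<in>K. \<forall>a\<in>K. mv K A (u k) a = complex_of_real (lam k) * u k a"
  using assms unfolding orthonormal_eigenbasis_def onf_def ip_def mv_def by auto

lemma oeb_quad:
  assumes "orthonormal_eigenbasis K A u lam" "k \<in> K"
  shows "ip K (mv K A (u k)) (u k) = complex_of_real (lam k)"
proof -
  have "ip K (mv K A (u k)) (u k) = ip K (\<lambda>a. complex_of_real (lam k) * u k a) (u k)"
    using oeb_onf(2)[OF assms(1)] assms(2) by (intro ip_cong) auto
  also have "\<dots> = complex_of_real (lam k)"
    unfolding ip_scale_left using oeb_onf(1)[OF assms(1)] assms(2) by (simp add: onf_def)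
  finally show ?thesis .
qed

lemma reduced_eig_nonneg:
  assumes S: "S \<subseteq> {..<N}"
    and oeb: "orthonormal_eigenbasis (PiE S (\<lambda>i. {..<d i})) (Defs.reduced N d V S) u lam"
    and k: "k \<in> PiE S (\<lambda>i. {..<d i})"
  shows "lam k \<ge> 0"
proof -
  have "complex_of_real (lam k) = complex_of_real
    (\<Sum>w\<in>PiE ({..<N} - S) (\<lambda>i. {..<d i}). (cmod (\<Sum>y\<in>PiE S (\<lambda>i. {..<d i}). V (mrg S y w) * cnj (u k y)))\<^sup>2)"
    using oeb_quad[OF oeb k] reduced_quad[OF S, of d V "u k"] by simp
  then have "lam k = (\<Sum>w\<in>PiE ({..<N} - S) (\<lambda>i. {..<d i}). (cmod (\<Sum>y\<in>PiE S (\<lambda>i. {..<d i}). V (mrg S y w) * cnj (u k y)))\<^sup>2)"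
    using of_real_eq_iff by blast
  then show ?thesis by (simp add: sum_nonneg)
qed



lemma prod_indicator_eq:
  assumes T: "finite T" and w: "w \<in> PiE T B" and w': "w' \<in> PiE T B"
  shows "(\<Prod>i\<in>T. (if w' i = w i then 1 else 0 :: complex)) = (if w' = w then 1 else 0)"
proof (cases "w' = w")
  case True then show ?thesis by simp
next
  case False
  then obtain i where i: "i \<in> T" "w' i \<noteq> w i" using w w' by (metis PiE_ext)
  then have "(\<Prod>i\<in>T. (if w' i = w i then 1 else 0 :: complex)) = 0"
    using T by (intro prod_zero) auto
  then show ?thesis using False by simp
qed

lemma unitary_inv:
  fixes E :: "nat \<Rightarrow> nat \<Rightarrow> nat \<Rightarrow> complex" and g :: "(nat \<Rightarrow> nat) \<Rightarrow> complex"
  assumes T: "finite T" and B: "\<And>i. finite (B i)"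
    and compl: "\<forall>i\<in>T. \<forall>a\<in>B i. \<forall>b\<in>B i. (\<Sum>c\<in>B i. cnj (E i c a) * E i c b) = (if b = a then 1 else 0)"
  shows "(\<Sum>c\<in>PiE T B. (cmod (\<Sum>w\<in>PiE T B. (\<Prod>i\<in>T. cnj (E i (c i) (w i))) * g w))\<^sup>2)
       = (\<Sum>w\<in>PiE T B. (cmod (g w))\<^sup>2)"
proof -
  define Pi where "Pi = PiE T B"
  define P where "P c w = (\<Prod>i\<in>T. cnj (E i (c i) (w i)))" for c w
  define X where "X c = (\<Sum>w\<in>Pi. P c w * g w)" for c
  have fin: "finite Pi" unfolding Pi_def using T B by (intro finite_PiE) auto
  have orth: "(\<Sum>c\<in>Pi. P c w * cnj (P c w')) = (if w' = w then 1 else 0)"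
    if w: "w \<in> Pi" and w': "w' \<in> Pi" for w w'
  proof -
    have "(\<Sum>c\<in>Pi. P c w * cnj (P c w')) = (\<Sum>c\<in>Pi. \<Prod>i\<in>T. cnj (E i (c i) (w i)) * E i (c i) (w' i))"
      unfolding P_def by (simp add: cnj_prod prod.distrib)
    also have "\<dots> = (\<Prod>i\<in>T. \<Sum>t\<in>B i. cnj (E i t (w i)) * E i t (w' i))"
      unfolding Pi_def by (rule prod_sum_PiE[symmetric]) (use T B in auto)
    also have "\<dots> = (\<Prod>i\<in>T. (if w' i = w i then 1 else 0))"
      using compl w w' unfolding Pi_def by (intro prod.cong refl) (auto simp: PiE_iff)
    also have "\<dots> = (if w' = w then 1 else 0)"
      using prod_indicator_eq[OF T] w w' unfolding Pi_def by blast
    finally show ?thesis .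
  qed
  have "complex_of_real (\<Sum>c\<in>Pi. (cmod (X c))\<^sup>2) = (\<Sum>c\<in>Pi. X c * cnj (X c))"
    by (simp add: mult_cnj_cmod)
  also have "\<dots> = (\<Sum>c\<in>Pi. \<Sum>w\<in>Pi. \<Sum>w'\<in>Pi. g w * cnj (g w') * (P c w * cnj (P c w')))"
  proof (rule sum.cong[OF refl])
    fix c
    have "X c * cnj (X c) = (\<Sum>w\<in>Pi. P c w * g w) * (\<Sum>w'\<in>Pi. cnj (P c w') * cnj (g w'))"
      unfolding X_def by (simp add: cnj_sum)
    also have "\<dots> = (\<Sum>w\<in>Pi. \<Sum>w'\<in>Pi. (P c w * g w) * (cnj (P c w') * cnj (g w')))"
      by (rule sum_product)
    finally show "X c * cnj (X c) = (\<Sum>w\<in>Pi. \<Sum>w'\<in>Pi. g w * cnj (g w') * (P c w * cnj (P c w')))"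
      by (simp only: mult_ac)
  qed
  also have "\<dots> = (\<Sum>w\<in>Pi. \<Sum>c\<in>Pi. \<Sum>w'\<in>Pi. g w * cnj (g w') * (P c w * cnj (P c w')))"
    by (rule sum.swap)
  also have "\<dots> = (\<Sum>w\<in>Pi. \<Sum>w'\<in>Pi. \<Sum>c\<in>Pi. g w * cnj (g w') * (P c w * cnj (P c w')))"
    by (rule sum.cong[OF refl]) (rule sum.swap)
  also have "\<dots> = (\<Sum>w\<in>Pi. \<Sum>w'\<in>Pi. g w * cnj (g w') * (if w' = w then 1 else 0))"
    by (intro sum.cong refl) (simp add: sum_distrib_left[symmetric] orth)
  also have "\<dots> = (\<Sum>w\<in>Pi. g w * cnj (g w))"
    using fin by (simp add: if_distrib[of "\<lambda>x. _ * x"] cong: if_cong)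
  also have "\<dots> = complex_of_real (\<Sum>w\<in>Pi. (cmod (g w))\<^sup>2)"
    by (simp add: mult_cnj_cmod)
  finally show ?thesis unfolding X_def P_def Pi_def using of_real_eq_iff by blast
qed



lemma quad_W:
  fixes N :: nat and d :: "nat \<Rightarrow> nat" and V :: "(nat \<Rightarrow> nat) \<Rightarrow> complex"
    and e :: "nat \<Rightarrow> nat \<Rightarrow> nat \<Rightarrow> complex"
  assumes S: "S \<subseteq> {..<N}" and s: "s \<in> PiE S (\<lambda>i. {..<d i})"
    and compl: "\<forall>i<N. \<forall>a\<in>{..<d i}. \<forall>b\<in>{..<d i}. (\<Sum>c\<in>{..<d i}. cnj (e i c a) * e i c b) = (if b = a then 1 else 0)"
  defines "K \<equiv> PiE S (\<lambda>i. {..<d i})" and "F \<equiv> (\<lambda>z. \<Prod>i\<in>S. e i (s i) (z i))"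
  shows "Re (ip K (mv K (Defs.reduced N d V S) F) F) =
    (\<Sum>c\<in>PiE ({..<N} - S) (\<lambda>i. {..<d i}). (cmod (coeff_in_basis N d V e (mrg S s c)))\<^sup>2)"
proof -
  define C where "C = {..<N} - S"
  define PC where "PC = PiE C (\<lambda>i. {..<d i})"
  define h where "h w = (\<Sum>y\<in>K. V (mrg S y w) * cnj (F y))" for w
  have "Re (ip K (mv K (Defs.reduced N d V S) F) F) = (\<Sum>w\<in>PC. (cmod (h w))\<^sup>2)"
    unfolding h_def PC_def C_def K_def using reduced_quad[OF S, of d V F] by simp
  also have "\<dots> = (\<Sum>c\<in>PC. (cmod (\<Sum>w\<in>PC. (\<Prod>i\<in>C. cnj (e i (c i) (w i))) * h w))\<^sup>2)"
    unfolding PC_def by (rule unitary_inv[symmetric]) (use compl in \<open>auto simp: C_def\<close>)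
  also have "\<dots> = (\<Sum>c\<in>PC. (cmod (coeff_in_basis N d V e (mrg S s c)))\<^sup>2)"
  proof (rule sum.cong[OF refl])
    fix c assume c: "c \<in> PC"
    have "coeff_in_basis N d V e (mrg S s c) =
       (\<Sum>y\<in>K. \<Sum>w\<in>PC. (\<Prod>i<N. cnj (e i (mrg S s c i) (mrg S y w i))) * V (mrg S y w))"
      unfolding coeff_in_basis_def configs_def K_def PC_def C_def
      by (rule sum_split[OF S]) auto
    also have "\<dots> = (\<Sum>y\<in>K. \<Sum>w\<in>PC. (\<Prod>i\<in>C. cnj (e i (c i) (w i))) * (V (mrg S y w) * cnj (F y)))"
    proof (intro sum.cong refl)
      fix y w
      have "(\<Prod>i<N. cnj (e i (mrg S s c i) (mrg S y w i))) =
        (\<Prod>i\<in>C. cnj (e i (mrg S s c i) (mrg S y w i))) * (\<Prod>i\<in>S. cnj (e i (mrg S s c i) (mrg S y w i)))"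
        unfolding C_def by (rule prod.subset_diff[OF S]) simp
      also have "\<dots> = (\<Prod>i\<in>C. cnj (e i (c i) (w i))) * cnj (F y)"
        unfolding F_def cnj_prod
        by (intro arg_cong2[where f = "(*)"] prod.cong refl) (auto simp: mrg_def C_def)
      finally show "(\<Prod>i<N. cnj (e i (mrg S s c i) (mrg S y w i))) * V (mrg S y w) =
         (\<Prod>i\<in>C. cnj (e i (c i) (w i))) * (V (mrg S y w) * cnj (F y))" by (simp only: mult_ac)
    qed
    also have "\<dots> = (\<Sum>w\<in>PC. (\<Prod>i\<in>C. cnj (e i (c i) (w i))) * h w)"
      unfolding h_def by (subst sum.swap) (simp add: sum_distrib_left)
    finally show "(cmod (\<Sum>w\<in>PC. (\<Prod>i\<in>C. cnj (e i (c i) (w i))) * h w))\<^sup>2 =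
      (cmod (coeff_in_basis N d V e (mrg S s c)))\<^sup>2" by simp
  qed
  finally show ?thesis unfolding PC_def C_def .
qed



lemma pt_bij: "bij_betw (\<lambda>a. (\<lambda>_. undefined)(i := a)) (B i) (PiE {i} B)"
proof (rule bij_betw_byWitness[where f' = "\<lambda>z. z i"])
  show "\<forall>a\<in>B i. ((\<lambda>_. undefined)(i := a)) i = a" by simp
  show "\<forall>z\<in>PiE {i} B. (\<lambda>_. undefined)(i := z i) = z"
    by (auto simp: PiE_def extensional_def fun_eq_iff)
  show "(\<lambda>a. (\<lambda>_. undefined)(i := a)) ` B i \<subseteq> PiE {i} B"
    by (auto simp: PiE_def extensional_def)
  show "(\<lambda>z. z i) ` PiE {i} B \<subseteq> B i" by (auto simp: PiE_def)
qed

lemma sum_pt: "(\<Sum>z\<in>PiE {i} B. f z) = (\<Sum>a\<in>B i. f ((\<lambda>_. undefined)(i := a)))"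
  by (rule sum.reindex_bij_betw[OF pt_bij, symmetric])

lemma pt_eq: "z \<in> PiE {i} B \<Longrightarrow> (\<lambda>_. undefined)(i := z i) = z"
  by (auto simp: PiE_def extensional_def fun_eq_iff)

lemma phi2: "(if t = 0 then 0 else t * log 2 t) = xlnx t / ln 2"
  unfolding xlnx_def log_def by simp

lemma vn_entropy_spec:
  assumes "finite K" "herm K A"
  shows "\<exists>u \<mu>. orthonormal_eigenbasis K A u \<mu> \<and> vn_entropy K A * ln 2 = - (\<Sum>k\<in>K. xlnx (\<mu> k))"
proof -
  have ex: "\<exists>h u lam. orthonormal_eigenbasis K A u lam \<and>
      h = - (\<Sum>k\<in>K. if lam k = 0 then 0 else lam k * log 2 (lam k))"
    using spectral[OF assms] by blast
  have "\<exists>u lam. orthonormal_eigenbasis K A u lam \<and>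
      vn_entropy K A = - (\<Sum>k\<in>K. if lam k = 0 then 0 else lam k * log 2 (lam k))"
    unfolding vn_entropy_def by (rule someI_ex[OF ex])
  then obtain u \<mu> where u: "orthonormal_eigenbasis K A u \<mu>"
    and h: "vn_entropy K A = - (\<Sum>k\<in>K. if \<mu> k = 0 then 0 else \<mu> k * log 2 (\<mu> k))" by blast
  have "vn_entropy K A * ln 2 = - (\<Sum>k\<in>K. xlnx (\<mu> k))"
    unfolding h phi2 by (simp add: sum_divide_distrib[symmetric])
  then show ?thesis using u by blast
qed

lemma single_party:
  fixes N :: nat and d :: "nat \<Rightarrow> nat" and V :: "(nat \<Rightarrow> nat) \<Rightarrow> complex"
    and e :: "nat \<Rightarrow> nat \<Rightarrow> nat \<Rightarrow> complex" and lam :: "nat \<Rightarrow> nat \<Rightarrow> real"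
  assumes i: "i < N"
    and EB: "orthonormal_eigenbasis {..<d i} (reduced1 N d V i) (e i) (lam i)"
    and compl: "\<forall>i<N. \<forall>a\<in>{..<d i}. \<forall>b\<in>{..<d i}. (\<Sum>c\<in>{..<d i}. cnj (e i c a) * e i c b) = (if b = a then 1 else 0)"
  shows "\<forall>a<d i. lam i a = (\<Sum>y\<in>{y \<in> configs N d. y i = a}. (cmod (coeff_in_basis N d V e y))\<^sup>2)"
    and "entropy_of N d V {i} * ln 2 \<ge> - (\<Sum>a<d i. xlnx (lam i a))"
proof -
  define B where "B = (\<lambda>i. {..<d i})"
  define K1 where "K1 = PiE {i} B"
  define \<rho> where "\<rho> = Defs.reduced N d V {i}"
  define pt where "pt a = (\<lambda>_. undefined)(i := a)" for a :: nat
  define w where "w a = (\<lambda>z. e i a (z i))" for a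
  have K1f: "finite K1" unfolding K1_def B_def by (intro finite_PiE) auto
  have cardK1: "card K1 = card (B i)" unfolding K1_def by (simp add: card_PiE B_def)
  have Si: "{i} \<subseteq> {..<N}" using i by simp
  have eb_orth: "\<forall>k\<in>B i. \<forall>l\<in>B i. (\<Sum>m\<in>B i. e i k m * cnj (e i l m)) = (if k = l then 1 else 0)"
    and eb_eig: "\<forall>k\<in>B i. \<forall>a\<in>B i. (\<Sum>b\<in>B i. reduced1 N d V i a b * e i k b) = complex_of_real (lam i k) * e i k a"
    using EB unfolding orthonormal_eigenbasis_def B_def by auto
  have onfw: "onf K1 (B i) w"
    unfolding onf_def
  proof (intro ballI)
    fix a b assume a: "a \<in> B i" and b: "b \<in> B i"
    have "ip K1 (w a) (w b) = (\<Sum>t\<in>B i. e i a t * cnj (e i b t))"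
      unfolding ip_def K1_def w_def sum_pt by simp
    then show "ip K1 (w a) (w b) = (if a = b then 1 else 0)" using eb_orth a b by simp
  qed
  have eigw: "\<forall>a\<in>B i. \<forall>y\<in>K1. mv K1 \<rho> (w a) y = complex_of_real (lam i a) * w a y"
  proof (intro ballI)
    fix a y assume a: "a \<in> B i" and y: "y \<in> K1"
    have yi: "y i \<in> B i" using PiE_mem[OF y[unfolded K1_def]] by simp
    have yeq: "pt (y i) = y" unfolding pt_def by (rule pt_eq[OF y[unfolded K1_def]])
    have "mv K1 \<rho> (w a) y = (\<Sum>b\<in>B i. \<rho> y (pt b) * e i a b)"
      unfolding mv_def K1_def sum_pt w_def pt_def by simp
    also have "\<dots> = (\<Sum>b\<in>B i. reduced1 N d V i (y i) b * e i a b)"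
      unfolding reduced1_def \<rho>_def pt_def[symmetric] yeq ..
    also have "\<dots> = complex_of_real (lam i a) * w a y" using eb_eig a yi unfolding w_def by simp
    finally show "mv K1 \<rho> (w a) y = complex_of_real (lam i a) * w a y" .
  qed
  have quadw: "Re (ip K1 (mv K1 \<rho> (w a)) (w a)) = lam i a" if a: "a \<in> B i" for a
  proof -
    have "ip K1 (mv K1 \<rho> (w a)) (w a) = ip K1 (\<lambda>y. complex_of_real (lam i a) * w a y) (w a)"
      using eigw a by (intro ip_cong) auto
    also have "\<dots> = complex_of_real (lam i a)" unfolding ip_scale_left
      using onfw a unfolding onf_def by simp
    finally show ?thesis by simp
  qed
  have marg: "lam i a = (\<Sum>y\<in>{y \<in> configs N d. y i = a}. (cmod (coeff_in_basis N d V e y))\<^sup>2)"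
    if a: "a \<in> B i" for a
  proof -
    have pta: "pt a \<in> PiE {i} B" unfolding pt_def using a by (auto simp: PiE_def extensional_def)
    have Fw: "(\<lambda>z. \<Prod>j\<in>{i}. e j (pt a j) (z j)) = w a" unfolding pt_def w_def by simp
    have "lam i a = (\<Sum>c\<in>PiE ({..<N} - {i}) B. (cmod (coeff_in_basis N d V e (mrg {i} (pt a) c)))\<^sup>2)"
      using quad_W[OF Si pta[unfolded B_def] compl] quadw[OF a]
      unfolding Fw K1_def \<rho>_def B_def by simp
    also have "\<dots> = (\<Sum>y\<in>{x \<in> PiE {..<N} B. restrict x {i} = pt a}. (cmod (coeff_in_basis N d V e y))\<^sup>2)"
      by (rule sum_fiber[OF Si pta, symmetric])
    also have "{x \<in> PiE {..<N} B. restrict x {i} = pt a} = {y \<in> configs N d. y i = a}"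
      unfolding configs_def B_def pt_def by (auto simp: fun_eq_iff restrict_def)
    finally show ?thesis .
  qed
  then show "\<forall>a<d i. lam i a = (\<Sum>y\<in>{y \<in> configs N d. y i = a}. (cmod (coeff_in_basis N d V e y))\<^sup>2)"
    unfolding B_def by simp
  have lam0: "\<forall>a\<in>B i. lam i a \<ge> 0" using marg by (simp add: sum_nonneg)
  have herm: "herm K1 \<rho>" unfolding K1_def \<rho>_def B_def by (rule reduced_herm[OF Si])
  obtain u \<mu> where u: "orthonormal_eigenbasis K1 \<rho> u \<mu>"
    and vn: "vn_entropy K1 \<rho> * ln 2 = - (\<Sum>k\<in>K1. xlnx (\<mu> k))"
    using vn_entropy_spec[OF K1f herm] by blast
  have "(\<Sum>k\<in>K1. xlnx (Re (ip K1 (mv K1 \<rho> (u k)) (u k)))) \<le> (\<Sum>a\<in>B i. xlnx (lam i a))"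
    by (rule diag_le[OF K1f _ K1f cardK1[symmetric] refl onfw eigw lam0 oeb_onf(1)[OF u]])
       (simp add: B_def)
  moreover have "Re (ip K1 (mv K1 \<rho> (u k)) (u k)) = \<mu> k" if "k \<in> K1" for k
    using oeb_quad[OF u that] by simp
  ultimately have "(\<Sum>k\<in>K1. xlnx (\<mu> k)) \<le> (\<Sum>a\<in>B i. xlnx (lam i a))" by simp
  moreover have "entropy_of N d V {i} = vn_entropy K1 \<rho>"
    unfolding entropy_of_def red_index_set_def K1_def \<rho>_def B_def ..
  ultimately show "entropy_of N d V {i} * ln 2 \<ge> - (\<Sum>a<d i. xlnx (lam i a))"
    using vn unfolding B_def by simp
qed



lemma pair_bij:
  assumes j: "j \<noteq> 0"
  shows "bij_betw (\<lambda>(a, b). (\<lambda>_. undefined)(0 := a, j := b)) (B 0 \<times> B j) (PiE {0, j} B)"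
proof (rule bij_betw_byWitness[where f' = "\<lambda>z. (z 0, z j)"])
  show "\<forall>x\<in>B 0 \<times> B j. (\<lambda>z. (z 0, z j)) ((\<lambda>(a, b). (\<lambda>_. undefined)(0 := a, j := b)) x) = x"
    using j by auto
  show "\<forall>z\<in>PiE {0, j} B. (\<lambda>(a, b). (\<lambda>_. undefined)(0 := a, j := b)) ((\<lambda>z. (z 0, z j)) z) = z"
  proof
    fix z assume z: "z \<in> PiE {0, j} B"
    show "(\<lambda>(a, b). (\<lambda>_. undefined)(0 := a, j := b)) ((\<lambda>z. (z 0, z j)) z) = z"
    proof (rule ext)
      fix i show "(\<lambda>(a, b). (\<lambda>_. undefined)(0 := a, j := b)) ((\<lambda>z. (z 0, z j)) z) i = z i"
        using z by (cases "i = 0"; cases "i = j") (auto simp: PiE_def extensional_def)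
    qed
  qed
  show "(\<lambda>(a, b). (\<lambda>_. undefined)(0 := a, j := b)) ` (B 0 \<times> B j) \<subseteq> PiE {0, j} B"
    using j by (auto simp: PiE_def extensional_def)
  show "(\<lambda>z. (z 0, z j)) ` PiE {0, j} B \<subseteq> B 0 \<times> B j"
  proof
    fix x assume "x \<in> (\<lambda>z. (z 0, z j)) ` PiE {0, j} B"
    then obtain z where z: "z \<in> PiE {0, j} B" and x: "x = (z 0, z j)" by auto
    show "x \<in> B 0 \<times> B j" unfolding x using PiE_mem[OF z] by simp
  qed
qed

lemma sum_pair:
  assumes j: "j \<noteq> 0"
  shows "(\<Sum>z\<in>PiE {0, j} B. f z) = (\<Sum>a\<in>B 0. \<Sum>b\<in>B j. f ((\<lambda>_. undefined)(0 := a, j := b)))"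
proof -
  have "(\<Sum>z\<in>PiE {0, j} B. f z) = (\<Sum>x\<in>B 0 \<times> B j. f ((\<lambda>(a, b). (\<lambda>_. undefined)(0 := a, j := b)) x))"
    by (rule sum.reindex_bij_betw[OF pair_bij[OF j], symmetric])
  also have "\<dots> = (\<Sum>a\<in>B 0. \<Sum>b\<in>B j. f ((\<lambda>_. undefined)(0 := a, j := b)))"
    by (subst sum.cartesian_product) (simp add: case_prod_beta)
  finally show ?thesis .
qed

lemma pair_party:
  fixes N :: nat and d :: "nat \<Rightarrow> nat" and V :: "(nat \<Rightarrow> nat) \<Rightarrow> complex"
    and e :: "nat \<Rightarrow> nat \<Rightarrow> nat \<Rightarrow> complex" and lam :: "nat \<Rightarrow> nat \<Rightarrow> real"
  assumes j0: "0 < j" and jN: "j < N"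
    and EB: "\<forall>i<N. orthonormal_eigenbasis {..<d i} (reduced1 N d V i) (e i) (lam i)"
    and compl: "\<forall>i<N. \<forall>a\<in>{..<d i}. \<forall>b\<in>{..<d i}. (\<Sum>c\<in>{..<d i}. cnj (e i c a) * e i c b) = (if b = a then 1 else 0)"
  shows "(\<Sum>a<d 0. \<Sum>b<d j. xlnx (\<Sum>y\<in>{y \<in> configs N d. y 0 = a \<and> y j = b}. (cmod (coeff_in_basis N d V e y))\<^sup>2))
     \<le> - (entropy_of N d V {0, j} * ln 2)"
proof -
  define B where "B = (\<lambda>i. {..<d i})"
  define K2 where "K2 = PiE {0, j} B"
  define \<rho> where "\<rho> = Defs.reduced N d V {0, j}"
  define s where "s a b = (\<lambda>_. undefined)(0 := a, j := b)" for a b :: nat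
  define F where "F = (\<lambda>(a, b) z. e 0 a (z 0) * e j b (z j))"
  define p where "p a b = (\<Sum>y\<in>{y \<in> configs N d. y 0 = a \<and> y j = b}. (cmod (coeff_in_basis N d V e y))\<^sup>2)" for a b
  have jne: "j \<noteq> 0" using j0 by simp
  have S: "{0, j} \<subseteq> {..<N}" using jN by auto
  have K2f: "finite K2" unfolding K2_def B_def by (intro finite_PiE) auto
  have cardK2: "card (B 0 \<times> B j) = card K2" unfolding K2_def using jne by (simp add: card_PiE B_def card_cartesian_product)
  have orth: "\<forall>k\<in>B i. \<forall>l\<in>B i. (\<Sum>m\<in>B i. e i k m * cnj (e i l m)) = (if k = l then 1 else 0)" if "i < N" for i
    using EB that unfolding orthonormal_eigenbasis_def B_def by auto
  have onfF: "onf K2 (B 0 \<times> B j) F"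
    unfolding onf_def
  proof (intro ballI)
    fix x x' assume x: "x \<in> B 0 \<times> B j" and x': "x' \<in> B 0 \<times> B j"
    obtain a b where ab: "x = (a, b)" "a \<in> B 0" "b \<in> B j" using x by auto
    obtain a' b' where ab': "x' = (a', b')" "a' \<in> B 0" "b' \<in> B j" using x' by auto
    have "ip K2 (F x) (F x') = (\<Sum>t\<in>B 0. \<Sum>u\<in>B j. (e 0 a t * cnj (e 0 a' t)) * (e j b u * cnj (e j b' u)))"
      unfolding ip_def K2_def sum_pair[OF jne] F_def ab(1) ab'(1) using jne by (simp add: mult_ac)
    also have "\<dots> = (\<Sum>t\<in>B 0. e 0 a t * cnj (e 0 a' t)) * (\<Sum>u\<in>B j. e j b u * cnj (e j b' u))"
      by (simp add: sum_product)
    also have "\<dots> = (if x = x' then 1 else 0)"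
      using orth[of 0] orth[of j] jN ab ab' by auto
    finally show "ip K2 (F x) (F x') = (if x = x' then 1 else 0)" .
  qed
  have quadF: "Re (ip K2 (mv K2 \<rho> (F (a, b))) (F (a, b))) = p a b" if a: "a \<in> B 0" and b: "b \<in> B j" for a b
  proof -
    have sab: "s a b \<in> PiE {0, j} B" unfolding s_def using a b jne by (auto simp: PiE_def extensional_def)
    have Fe: "(\<lambda>z. \<Prod>i\<in>{0, j}. e i (s a b i) (z i)) = F (a, b)" unfolding s_def F_def using jne by simp
    have "Re (ip K2 (mv K2 \<rho> (F (a, b))) (F (a, b))) =
       (\<Sum>c\<in>PiE ({..<N} - {0, j}) B. (cmod (coeff_in_basis N d V e (mrg {0, j} (s a b) c)))\<^sup>2)"
      using quad_W[OF S sab[unfolded B_def] compl] unfolding Fe K2_def \<rho>_def B_def by simp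
    also have "\<dots> = (\<Sum>y\<in>{x \<in> PiE {..<N} B. restrict x {0, j} = s a b}. (cmod (coeff_in_basis N d V e y))\<^sup>2)"
      by (rule sum_fiber[OF S sab, symmetric])
    also have "{x \<in> PiE {..<N} B. restrict x {0, j} = s a b} = {y \<in> configs N d. y 0 = a \<and> y j = b}"
      unfolding configs_def B_def s_def using jne by (auto simp: fun_eq_iff restrict_def)
    finally show ?thesis unfolding p_def .
  qed
  have herm: "herm K2 \<rho>" unfolding K2_def \<rho>_def B_def by (rule reduced_herm[OF S])
  obtain u \<mu> where u: "orthonormal_eigenbasis K2 \<rho> u \<mu>"
    and vn: "vn_entropy K2 \<rho> * ln 2 = - (\<Sum>k\<in>K2. xlnx (\<mu> k))"
    using vn_entropy_spec[OF K2f herm] by blast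
  have \<mu>0: "\<forall>k\<in>K2. \<mu> k \<ge> 0"
    using reduced_eig_nonneg[OF S u[unfolded K2_def \<rho>_def B_def]] unfolding K2_def B_def by blast
  have fin2: "finite (B 0 \<times> B j)" unfolding B_def by simp
  have "(\<Sum>x\<in>B 0 \<times> B j. xlnx (Re (ip K2 (mv K2 \<rho> (F x)) (F x)))) \<le> (\<Sum>k\<in>K2. xlnx (\<mu> k))"
    by (rule diag_le[OF K2f K2f fin2 refl cardK2 oeb_onf(1)[OF u] oeb_onf(2)[OF u] \<mu>0 onfF])
  moreover have "(\<Sum>x\<in>B 0 \<times> B j. xlnx (Re (ip K2 (mv K2 \<rho> (F x)) (F x)))) = (\<Sum>a\<in>B 0. \<Sum>b\<in>B j. xlnx (p a b))"
  proof -
    have "(\<Sum>a\<in>B 0. \<Sum>b\<in>B j. xlnx (p a b)) =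
       (\<Sum>a\<in>B 0. \<Sum>b\<in>B j. xlnx (Re (ip K2 (mv K2 \<rho> (F (a, b))) (F (a, b)))))"
      using quadF by (intro sum.cong refl) simp
    also have "\<dots> = (\<Sum>x\<in>B 0 \<times> B j. xlnx (Re (ip K2 (mv K2 \<rho> (F x)) (F x))))"
      by (subst sum.cartesian_product) (simp add: case_prod_beta)
    finally show ?thesis by simp
  qed
  moreover have "entropy_of N d V {0, j} = vn_entropy K2 \<rho>"
    unfolding entropy_of_def red_index_set_def K2_def \<rho>_def B_def ..
  ultimately show ?thesis using vn unfolding p_def B_def by simp
qed



lemma sum_group':
  assumes "finite S" "finite T" "\<forall>x\<in>S. g x \<in> T"
  shows "(\<Sum>y\<in>T. \<Sum>x\<in>{x \<in> S. g x = y}. h x) = (\<Sum>x\<in>S. h x)"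
  using sum.group[OF assms(1,2), of g h] assms(3) by auto

theorem lemma2:
  fixes N :: nat and d :: "nat \<Rightarrow> nat" and V :: "(nat \<Rightarrow> nat) \<Rightarrow> complex"
    and e :: "nat \<Rightarrow> nat \<Rightarrow> nat \<Rightarrow> complex" and lam :: "nat \<Rightarrow> nat \<Rightarrow> real"
  assumes "N \<ge> 2"
    and "\<forall>i<N. d i \<ge> 1"
    and "(\<Sum>x\<in>configs N d. (cmod (V x))\<^sup>2) = 1"
    and "\<forall>j. 0 < j \<and> j < N \<longrightarrow> mutual_info N d V 0 j = 0"
    and "\<forall>i<N. orthonormal_eigenbasis {..<d i} (reduced1 N d V i) (e i) (lam i)"
    and "\<forall>i<N. \<forall>k l. k \<le> l \<and> l < d i \<longrightarrow> lam i l \<le> lam i k"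
  shows "(\<Sum>x1\<in>{1..<d 0}. (cmod (coeff_in_basis N d V e (\<lambda>i. if i = 0 then x1 else 0)))\<^sup>2)
           \<ge> (1 - lam 0 0) * (1 + (1 - lam 0 0) - (\<Sum>i<N. 1 - lam i 0))"
proof -
  note N2 = assms(1) and dpos = assms(2) and normV = assms(3) and MI = assms(4) and EB = assms(5)
  define Q where "Q = configs N d"
  define f where "f y = (cmod (coeff_in_basis N d V e y))\<^sup>2" for y
  define \<epsilon> where "\<epsilon> i = 1 - lam i 0" for i
  define J where "J = {1..<N}"
  have Qf: "finite Q" unfolding Q_def configs_def by (intro finite_PiE) auto
  have f0: "f y \<ge> 0" for y unfolding f_def by simp
  have compl: "\<forall>i<N. \<forall>a\<in>{..<d i}. \<forall>b\<in>{..<d i}. (\<Sum>c\<in>{..<d i}. cnj (e i c a) * e i c b) = (if b = a then 1 else 0)"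
  proof (intro allI impI ballI)
    fix i a b assume i: "i < N" and a: "a \<in> {..<d i}" and b: "b \<in> {..<d i}"
    show "(\<Sum>c\<in>{..<d i}. cnj (e i c a) * e i c b) = (if b = a then 1 else 0)"
      using onf_complete[OF _ _ oeb_onf(1)[OF EB[rule_format, OF i]] refl a b] by simp
  qed
  have tot: "(\<Sum>y\<in>Q. f y) = 1"
  proof -
    have "(\<Sum>y\<in>Q. f y) = (\<Sum>x\<in>configs N d. (cmod (V x))\<^sup>2)"
      unfolding f_def Q_def coeff_in_basis_def configs_def
      by (rule unitary_inv) (use compl in auto)
    then show ?thesis using normV by simp
  qed
  have marg: "\<forall>a<d i. lam i a = (\<Sum>y\<in>{y \<in> Q. y i = a}. f y)" if i: "i < N" for i
    using single_party(1)[where i=i and N=N and d=d and V=V and e=e and lam=lam, OF i EB[rule_format, OF i] compl] unfolding Q_def f_def .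
  have ent: "entropy_of N d V {i} * ln 2 \<ge> - (\<Sum>a<d i. xlnx (lam i a))" if i: "i < N" for i
    using single_party(2)[where i=i and N=N and d=d and V=V and e=e and lam=lam, OF i EB[rule_format, OF i] compl] .
  have QB: "\<forall>y\<in>Q. y i \<in> {..<d i}" if "i < N" for i
    unfolding Q_def configs_def using that by (auto simp: PiE_def)
  have sumlam: "(\<Sum>a<d i. lam i a) = 1" if i: "i < N" for i
  proof -
    have "(\<Sum>a<d i. lam i a) = (\<Sum>a<d i. \<Sum>y\<in>{y \<in> Q. y i = a}. f y)" using marg[OF i] by simp
    also have "\<dots> = (\<Sum>y\<in>Q. f y)" by (rule sum_group'[OF Qf _ QB[OF i]]) simp
    finally show ?thesis using tot by simp
  qed
  have epsum: "(\<Sum>a\<in>{1..<d i}. lam i a) = \<epsilon> i" if i: "i < N" for i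
  proof -
    have "{..<d i} = insert 0 {1..<d i}" using dpos i by auto
    then have "(\<Sum>a<d i. lam i a) = lam i 0 + (\<Sum>a\<in>{1..<d i}. lam i a)" by simp
    then show ?thesis using sumlam[OF i] unfolding \<epsilon>_def by simp
  qed
  define p where "p j a b = (\<Sum>y\<in>{y \<in> Q. y 0 = a \<and> y j = b}. f y)" for j a b
  have prodp: "p j a b = lam 0 a * lam j b" if j: "j \<in> J" and a: "a < d 0" and b: "b < d j" for j a b
  proof -
    have j0: "0 < j" and jN: "j < N" using j unfolding J_def by auto
    have N0: "0 < N" using jN by simp
    have row: "(\<Sum>b<d j. p j a b) = lam 0 a" if a: "a < d 0" for a
    proof -
      have "(\<Sum>b<d j. p j a b) = (\<Sum>b<d j. \<Sum>y\<in>{y \<in> {y \<in> Q. y 0 = a}. y j = b}. f y)"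
      proof -
        have "{y \<in> Q. y 0 = a \<and> y j = b} = {y \<in> {y \<in> Q. y 0 = a}. y j = b}" for b by blast
        then show ?thesis unfolding p_def by (simp only:)
      qed
      also have "\<dots> = (\<Sum>y\<in>{y \<in> Q. y 0 = a}. f y)"
        by (rule sum_group') (use Qf QB[OF jN] in auto)
      finally show ?thesis using marg[OF N0] a by simp
    qed
    have col: "(\<Sum>a<d 0. p j a b) = lam j b" if b: "b < d j" for b
    proof -
      have "(\<Sum>a<d 0. p j a b) = (\<Sum>a<d 0. \<Sum>y\<in>{y \<in> {y \<in> Q. y j = b}. y 0 = a}. f y)"
      proof -
        have "{y \<in> Q. y 0 = a \<and> y j = b} = {y \<in> {y \<in> Q. y j = b}. y 0 = a}" for a by blast
        then show ?thesis unfolding p_def by (simp only:)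
      qed
      also have "\<dots> = (\<Sum>y\<in>{y \<in> Q. y j = b}. f y)"
        by (rule sum_group') (use Qf QB[OF N0] in auto)
      finally show ?thesis using marg[OF jN] b by simp
    qed
    have ptot: "(\<Sum>a<d 0. \<Sum>b<d j. p j a b) = 1" using row sumlam[OF N0] by simp
    have pnn: "\<forall>a\<in>{..<d 0}. \<forall>b\<in>{..<d j}. p j a b \<ge> 0" unfolding p_def using f0 by (auto intro!: sum_nonneg)
    have H: "(\<Sum>a<d 0. \<Sum>b<d j. xlnx (p j a b)) \<le>
       (\<Sum>a<d 0. xlnx (\<Sum>b<d j. p j a b)) + (\<Sum>b<d j. xlnx (\<Sum>a<d 0. p j a b))"
    proof -
      have "(\<Sum>a<d 0. \<Sum>b<d j. xlnx (p j a b)) \<le> - (entropy_of N d V {0, j} * ln 2)"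
        using pair_party[where j=j and N=N and d=d and V=V and e=e and lam=lam, OF j0 jN EB compl] unfolding p_def Q_def f_def .
      also have "entropy_of N d V {0, j} = entropy_of N d V {0} + entropy_of N d V {j}"
        using MI j0 jN unfolding mutual_info_def by auto
      also have "- ((entropy_of N d V {0} + entropy_of N d V {j}) * ln 2) \<le>
          (\<Sum>a<d 0. xlnx (lam 0 a)) + (\<Sum>b<d j. xlnx (lam j b))"
        using ent[OF N0] ent[OF jN] by (simp add: distrib_right)
      also have "\<dots> = (\<Sum>a<d 0. xlnx (\<Sum>b<d j. p j a b)) + (\<Sum>b<d j. xlnx (\<Sum>a<d 0. p j a b))"
        using row col by simp
      finally show ?thesis .
    qed
    have cl: "\<forall>a\<in>{..<d 0}. \<forall>b\<in>{..<d j}. p j a b = (\<Sum>b<d j. p j a b) * (\<Sum>a<d 0. p j a b)"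
      by (rule classical_indep[OF _ _ pnn ptot H]) auto
    have "p j a b = (\<Sum>b<d j. p j a b) * (\<Sum>a<d 0. p j a b)"
      using cl a b by blast
    then show ?thesis unfolding row[OF a] col[OF b] .
  qed
  have N0: "0 < N" using N2 by simp
  have corner: "(\<Sum>y\<in>{y \<in> Q. 1 \<le> y 0 \<and> 1 \<le> y j}. f y) = \<epsilon> 0 * \<epsilon> j" if j: "j \<in> J" for j
  proof -
    have jN: "j < N" using j unfolding J_def by auto
    have "(\<Sum>y\<in>{y \<in> Q. 1 \<le> y 0 \<and> 1 \<le> y j}. f y) =
       (\<Sum>a\<in>{1..<d 0}. \<Sum>y\<in>{y \<in> {y \<in> Q. 1 \<le> y 0 \<and> 1 \<le> y j}. y 0 = a}. f y)"
      by (rule sum_group'[symmetric]) (use Qf QB[OF N0] in auto)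
    also have "\<dots> = (\<Sum>a\<in>{1..<d 0}. \<Sum>b\<in>{1..<d j}. p j a b)"
    proof (rule sum.cong[OF refl])
      fix a assume a: "a \<in> {1..<d 0}"
      have "(\<Sum>y\<in>{y \<in> {y \<in> Q. 1 \<le> y 0 \<and> 1 \<le> y j}. y 0 = a}. f y) =
        (\<Sum>b\<in>{1..<d j}. \<Sum>y\<in>{y \<in> {y \<in> {y \<in> Q. 1 \<le> y 0 \<and> 1 \<le> y j}. y 0 = a}. y j = b}. f y)"
        by (rule sum_group'[symmetric]) (use Qf QB[OF jN] in auto)
      also have "\<dots> = (\<Sum>b\<in>{1..<d j}. p j a b)"
      proof (rule sum.cong[OF refl])
        fix b assume b: "b \<in> {1..<d j}"
        have "{y \<in> {y \<in> {y \<in> Q. 1 \<le> y 0 \<and> 1 \<le> y j}. y 0 = a}. y j = b} = {y \<in> Q. y 0 = a \<and> y j = b}"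
          using a b by auto
        then show "(\<Sum>y\<in>{y \<in> {y \<in> {y \<in> Q. 1 \<le> y 0 \<and> 1 \<le> y j}. y 0 = a}. y j = b}. f y) = p j a b"
          unfolding p_def by (simp only:)
      qed
      finally show "(\<Sum>y\<in>{y \<in> {y \<in> Q. 1 \<le> y 0 \<and> 1 \<le> y j}. y 0 = a}. f y) = (\<Sum>b\<in>{1..<d j}. p j a b)" .
    qed
    also have "\<dots> = (\<Sum>a\<in>{1..<d 0}. \<Sum>b\<in>{1..<d j}. lam 0 a * lam j b)"
      using prodp[OF j] by (intro sum.cong refl) auto
    also have "\<dots> = (\<Sum>a\<in>{1..<d 0}. lam 0 a) * (\<Sum>b\<in>{1..<d j}. lam j b)"
      by (simp add: sum_product)
    also have "\<dots> = \<epsilon> 0 * \<epsilon> j" using epsum[OF N0] epsum[OF jN] by simp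
    finally show ?thesis .
  qed
  define Q1 where "Q1 = {y \<in> Q. 1 \<le> y 0}"
  have Q1f: "finite Q1" unfolding Q1_def using Qf by simp
  have first: "(\<Sum>y\<in>Q1. f y) = \<epsilon> 0"
  proof -
    have "(\<Sum>y\<in>Q1. f y) = (\<Sum>a\<in>{1..<d 0}. \<Sum>y\<in>{y \<in> Q1. y 0 = a}. f y)"
      by (rule sum_group'[symmetric]) (use Q1f QB[OF N0] in \<open>auto simp: Q1_def\<close>)
    also have "\<dots> = (\<Sum>a\<in>{1..<d 0}. lam 0 a)"
    proof (rule sum.cong[OF refl])
      fix a assume a: "a \<in> {1..<d 0}"
      have "{y \<in> Q1. y 0 = a} = {y \<in> Q. y 0 = a}" using a unfolding Q1_def by auto
      then show "(\<Sum>y\<in>{y \<in> Q1. y 0 = a}. f y) = lam 0 a" using marg[OF N0] a by simp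
    qed
    also have "\<dots> = \<epsilon> 0" by (rule epsum[OF N0])
    finally show ?thesis .
  qed
  define A where "A y = (if \<forall>i\<in>J. y i = 0 then f y else 0)" for y
  define Bj where "Bj j y = (if 1 \<le> y j then f y else 0)" for j y
  have pw: "f y \<le> A y + (\<Sum>j\<in>J. Bj j y)" if y: "y \<in> Q1" for y
  proof (cases "\<forall>i\<in>J. y i = 0")
    case True
    have "(\<Sum>j\<in>J. Bj j y) \<ge> 0" unfolding Bj_def using f0 by (intro sum_nonneg) auto
    then show ?thesis unfolding A_def using True by simp
  next
    case False
    then obtain j where j: "j \<in> J" "y j \<noteq> 0" by blast
    have "Bj j y \<le> (\<Sum>j\<in>J. Bj j y)"
      by (rule member_le_sum) (use j f0 in \<open>auto simp: Bj_def J_def\<close>)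
    moreover have "Bj j y = f y" using j unfolding Bj_def by simp
    moreover have "A y \<ge> 0" unfolding A_def using f0 by simp
    ultimately show ?thesis by simp
  qed
  have "\<epsilon> 0 \<le> (\<Sum>y\<in>Q1. A y + (\<Sum>j\<in>J. Bj j y))"
    unfolding first[symmetric] using pw by (intro sum_mono) auto
  also have "\<dots> = (\<Sum>y\<in>Q1. A y) + (\<Sum>j\<in>J. \<Sum>y\<in>Q1. Bj j y)"
    by (simp add: sum.distrib sum.swap[of _ J])
  also have "(\<Sum>j\<in>J. \<Sum>y\<in>Q1. Bj j y) = (\<Sum>j\<in>J. \<epsilon> 0 * \<epsilon> j)"
  proof (rule sum.cong[OF refl])
    fix j assume j: "j \<in> J"
    have "(\<Sum>y\<in>Q1. Bj j y) = (\<Sum>y\<in>{y \<in> Q1. 1 \<le> y j}. f y)"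
      unfolding Bj_def using Q1f by (simp add: sum.inter_filter)
    also have "{y \<in> Q1. 1 \<le> y j} = {y \<in> Q. 1 \<le> y 0 \<and> 1 \<le> y j}" unfolding Q1_def by auto
    finally show "(\<Sum>y\<in>Q1. Bj j y) = \<epsilon> 0 * \<epsilon> j" using corner[OF j] by simp
  qed
  also have "(\<Sum>y\<in>Q1. A y) = (\<Sum>x1\<in>{1..<d 0}. (cmod (coeff_in_basis N d V e (\<lambda>i. if i = 0 then x1 else 0)))\<^sup>2)"
  proof -
    define r where "r x = restrict (\<lambda>i. if i = 0 then x else 0) {..<N}" for x :: nat
    have "(\<Sum>y\<in>Q1. A y) = (\<Sum>y\<in>{y \<in> Q1. \<forall>i\<in>J. y i = 0}. f y)"
      unfolding A_def using Q1f by (simp add: sum.inter_filter)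
    also have "{y \<in> Q1. \<forall>i\<in>J. y i = 0} = r ` {1..<d 0}"
    proof
      show "{y \<in> Q1. \<forall>i\<in>J. y i = 0} \<subseteq> r ` {1..<d 0}"
      proof
        fix y assume y: "y \<in> {y \<in> Q1. \<forall>i\<in>J. y i = 0}"
        then have yQ: "y \<in> PiE {..<N} (\<lambda>i. {..<d i})" and y0: "1 \<le> y 0" and yJ: "\<forall>i\<in>J. y i = 0"
          unfolding Q1_def Q_def configs_def by auto
        have "y 0 < d 0" using PiE_mem[OF yQ, of 0] N0 by simp
        moreover have "y = r (y 0)"
        proof (rule ext)
          fix i show "y i = r (y 0) i"
            using yQ yJ unfolding r_def J_def by (cases "i < N") (auto simp: PiE_def extensional_def)
        qed
        ultimately show "y \<in> r ` {1..<d 0}" using y0 by auto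
      qed
      show "r ` {1..<d 0} \<subseteq> {y \<in> Q1. \<forall>i\<in>J. y i = 0}"
      proof
        fix y assume "y \<in> r ` {1..<d 0}"
        then obtain x where x: "x \<in> {1..<d 0}" and y: "y = r x" by auto
        have "r x \<in> PiE {..<N} (\<lambda>i. {..<d i})"
          unfolding r_def using x dpos by (auto simp: PiE_def)
        moreover have "r x 0 = x" unfolding r_def using N0 by simp
        moreover have "\<forall>i\<in>J. r x i = 0" unfolding r_def J_def by auto
        ultimately show "y \<in> {y \<in> Q1. \<forall>i\<in>J. y i = 0}"
          unfolding y Q1_def Q_def configs_def using x by auto
      qed
    qed
    also have "(\<Sum>y\<in>r ` {1..<d 0}. f y) = (\<Sum>x\<in>{1..<d 0}. f (r x))"
    proof -
      have inj: "inj_on r {1..<d 0}"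
      proof
        fix x x' assume "r x = r x'"
        then have "r x 0 = r x' 0" by simp
        then show "x = x'" unfolding r_def using N0 by simp
      qed
      show ?thesis using sum.reindex[OF inj, of f] by (simp add: o_def)
    qed
    also have "\<dots> = (\<Sum>x1\<in>{1..<d 0}. (cmod (coeff_in_basis N d V e (\<lambda>i. if i = 0 then x1 else 0)))\<^sup>2)"
    proof (rule sum.cong[OF refl])
      fix x
      have "coeff_in_basis N d V e (r x) = coeff_in_basis N d V e (\<lambda>i. if i = 0 then x else 0)"
        unfolding coeff_in_basis_def r_def by (intro sum.cong refl arg_cong2[where f = "(*)"] prod.cong) auto
      then show "f (r x) = (cmod (coeff_in_basis N d V e (\<lambda>i. if i = 0 then x else 0)))\<^sup>2"
        unfolding f_def by simp
    qed
    finally show ?thesis .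
  qed
  finally have main: "\<epsilon> 0 \<le> (\<Sum>x1\<in>{1..<d 0}. (cmod (coeff_in_basis N d V e (\<lambda>i. if i = 0 then x1 else 0)))\<^sup>2)
      + (\<Sum>j\<in>J. \<epsilon> 0 * \<epsilon> j)" .
  have "(\<Sum>i<N. 1 - lam i 0) = \<epsilon> 0 + (\<Sum>j\<in>J. \<epsilon> j)"
  proof -
    have "{..<N} = insert 0 J" unfolding J_def using N0 by auto
    then show ?thesis unfolding \<epsilon>_def J_def by simp
  qed
  then have "(1 - lam 0 0) * (1 + (1 - lam 0 0) - (\<Sum>i<N. 1 - lam i 0)) = \<epsilon> 0 - (\<Sum>j\<in>J. \<epsilon> 0 * \<epsilon> j)"
  proof -
    have t3: "(\<Sum>j\<in>J. \<epsilon> 0 * \<epsilon> j) = \<epsilon> 0 * (\<Sum>j\<in>J. \<epsilon> j)" by (rule sum_distrib_left[symmetric])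
    have t2: "1 - lam 0 0 = \<epsilon> 0" unfolding \<epsilon>_def ..
    show ?thesis unfolding t3 t2 \<open>(\<Sum>i<N. 1 - lam i 0) = \<epsilon> 0 + (\<Sum>j\<in>J. \<epsilon> j)\<close>
      by (simp add: algebra_simps)
  qed
  then show ?thesis using main by simp
qed

end
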